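(* There exists an outerplanar graph whose track number is exactly $5$ (i.e. it has no $4$-track layout).
   Context: A $t$-track assignment of a graph $G$ is a partition of $V(G)$ into $t$ sets $V_1,\dots,V_t$ (tracks), each an independent set of $G$, together with a total order $<_i$ on each $V_i$. An X-crossing consists of two edges $(u,v)$ and $(x,y)$ with $u,x\in V_i$, $v,y\in V_j$ ($i\neq j$), $u<_i x$ and $y<_j v$. A $t$-track layout is a $t$-track assignment with no X-crossing; the track number $\mathrm{tn}(G)$ is the minimum $t$ for which $G$ has a $t$-track layout. *)

theory Defs
  imports "HOL-Analysis.Analysis"
begin

definition simple_graph :: "'a set \<Rightarrow> ('a \<times> 'a) set \<Rightarrow> bool" where
  "simple_graph V E \<longleftrightarrow> finite V \<and> E \<subseteq> V \<times> V \<and> sym E \<and> irrefl E"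

definition track_layout :: "'a set \<Rightarrow> ('a \<times> 'a) set \<Rightarrow> nat \<Rightarrow> bool" where
  "track_layout V E t \<longleftrightarrow>
    (\<exists>(trk :: 'a \<Rightarrow> nat) (ord :: nat \<Rightarrow> ('a \<times> 'a) set).
       (\<forall>v\<in>V. trk v < t)
     \<and> (\<forall>(u, v)\<in>E. trk u \<noteq> trk v)
     \<and> (\<forall>i<t. ord i \<subseteq> {v\<in>V. trk v = i} \<times> {v\<in>V. trk v = i}
              \<and> strict_linear_order_on {v\<in>V. trk v = i} (ord i))
     \<and> (\<forall>u v x y. (u, v) \<in> E \<longrightarrow> (x, y) \<in> E \<longrightarrow>
            trk u = trk x \<longrightarrow> trk v = trk y \<longrightarrow> trk u \<noteq> trk v \<longrightarrow>
            \<not> ((u, x) \<in> ord (trk u) \<and> (y, v) \<in> ord (trk v))))"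

definition track_number :: "'a set \<Rightarrow> ('a \<times> 'a) set \<Rightarrow> nat" where
  "track_number V E = (LEAST t. track_layout V E t)"

definition plane_embedding ::
  "'a set \<Rightarrow> ('a \<times> 'a) set \<Rightarrow> ('a \<Rightarrow> real^2) \<Rightarrow> ('a \<Rightarrow> 'a \<Rightarrow> real \<Rightarrow> real^2) \<Rightarrow> bool" where
  "plane_embedding V E p \<gamma> \<longleftrightarrow>
     inj_on p V
   \<and> (\<forall>(u, v)\<in>E. arc (\<gamma> u v) \<and> pathstart (\<gamma> u v) = p u \<and> pathfinish (\<gamma> u v) = p v
                 \<and> path_image (\<gamma> v u) = path_image (\<gamma> u v))
   \<and> (\<forall>(u, v)\<in>E. \<forall>w\<in>V. w \<noteq> u \<and> w \<noteq> v \<longrightarrow> p w \<notin> path_image (\<gamma> u v))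
   \<and> (\<forall>(u, v)\<in>E. \<forall>(x, y)\<in>E. {u, v} \<noteq> {x, y} \<longrightarrow>
        path_image (\<gamma> u v) \<inter> path_image (\<gamma> x y) \<subseteq> p ` ({u, v} \<inter> {x, y}))"

definition drawing :: "'a set \<Rightarrow> ('a \<times> 'a) set \<Rightarrow> ('a \<Rightarrow> real^2) \<Rightarrow> ('a \<Rightarrow> 'a \<Rightarrow> real \<Rightarrow> real^2) \<Rightarrow> (real^2) set" where
  "drawing V E p \<gamma> = p ` V \<union> (\<Union>(u, v)\<in>E. path_image (\<gamma> u v))"

definition outerplanar :: "'a set \<Rightarrow> ('a \<times> 'a) set \<Rightarrow> bool" where
  "outerplanar V E \<longleftrightarrow>
    (\<exists>p \<gamma> z. plane_embedding V E p \<gamma> \<and> z \<notin> drawing V E p \<gamma>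
        \<and> \<not> bounded (connected_component_set (- drawing V E p \<gamma>) z)
        \<and> (\<forall>v\<in>V. p v \<in> closure (connected_component_set (- drawing V E p \<gamma>) z)))"

end

theory Submission
  imports Defs
begin

definition P :: "real \<Rightarrow> real \<Rightarrow> real^2" where "P x y = vector [x, y]"

lemma P_comp [simp]: "P x y $ 1 = x" "P x y $ 2 = y"
  by (simp_all add: P_def)

lemma P_eq [simp]: "P a b = P c d \<longleftrightarrow> a = c \<and> b = d"
  by (auto simp: vec_eq_iff forall_2)

lemma P_lin: "P x y = x *\<^sub>R P 1 0 + y *\<^sub>R P 0 1"
  by (simp add: vec_eq_iff forall_2)

lemma continuous_on_P [continuous_intros]:
  "continuous_on S f \<Longrightarrow> continuous_on S g \<Longrightarrow> continuous_on S (\<lambda>t. P (f t) (g t))"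
  by (subst P_lin) (intro continuous_intros)

definition gp :: "real \<Rightarrow> real \<Rightarrow> real \<Rightarrow> real^2" where
  "gp a b t = P (a + t * (b - a)) ((t * (b - a)) * ((1 - t) * (b - a)))"

definition Img :: "real \<Rightarrow> real \<Rightarrow> (real^2) set" where
  "Img a b = {P x ((x - a) * (b - x)) | x. a \<le> x \<and> x \<le> b}"

lemma gp_arc: assumes "a < b" shows "arc (gp a b)"
  unfolding arc_def path_def
proof
  show "continuous_on {0..1} (gp a b)" unfolding gp_def by (intro continuous_intros)
  show "inj_on (gp a b) {0..1}"
    using assms by (auto simp: inj_on_def gp_def)
qed

lemma gp_start [simp]: "pathstart (gp a b) = P a 0" and gp_finish [simp]: "pathfinish (gp a b) = P b 0"
  by (simp_all add: pathstart_def pathfinish_def gp_def)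

lemma gp_image: assumes "a < b" shows "path_image (gp a b) = Img a b"
proof
  show "path_image (gp a b) \<subseteq> Img a b"
  proof
    fix z assume "z \<in> path_image (gp a b)"
    then obtain t where t: "0 \<le> t" "t \<le> 1" "z = gp a b t" by (auto simp: path_image_def)
    define x where "x = a + t * (b - a)"
    have "a \<le> x" using t assms by (simp add: x_def)
    moreover have "x \<le> b" using t assms
      by (simp add: x_def) (metis mult_left_le_one_le diff_ge_0_iff_ge less_eq_real_def add.commute le_diff_eq)
    moreover have "z = P x ((x - a) * (b - x))"
      using t by (simp add: x_def gp_def algebra_simps)
    ultimately show "z \<in> Img a b" by (auto simp: Img_def)
  qed
  show "Img a b \<subseteq> path_image (gp a b)"
  proof
    fix z assume "z \<in> Img a b"
    then obtain x where x: "a \<le> x" "x \<le> b" "z = P x ((x - a) * (b - x))" by (auto simp: Img_def)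
    define t where "t = (x - a) / (b - a)"
    have t0: "0 \<le> t" "t \<le> 1" using x assms by (auto simp: t_def divide_simps)
    have xt: "x = a + t * (b - a)" using assms by (simp add: t_def)
    have "z = gp a b t" using x(3) by (simp add: gp_def xt algebra_simps)
    then show "z \<in> path_image (gp a b)" using t0 by (auto simp: path_image_def)
  qed
qed

lemma Img_nonneg: "z \<in> Img a b \<Longrightarrow> z $ 2 \<ge> 0"
  by (auto simp: Img_def)

lemma Img_vertex: assumes "P w 0 \<in> Img a b" shows "w = a \<or> w = b"
  using assms by (auto simp: Img_def)

lemma Img_inter:
  assumes ab: "a < b" and cd: "c < d" and ne: "(a, b) \<noteq> (c, d)"
    and nc1: "\<not> (a < c \<and> c < b \<and> b < d)" and nc2: "\<not> (c < a \<and> a < d \<and> d < b)"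
    and z1: "z \<in> Img a b" and z2: "z \<in> Img c d"
  shows "\<exists>x. z = P x 0 \<and> (x = a \<or> x = b) \<and> (x = c \<or> x = d)"
proof -
  obtain x where x: "a \<le> x" "x \<le> b" "z = P x ((x - a) * (b - x))" using z1 by (auto simp: Img_def)
  obtain x' where x': "c \<le> x'" "x' \<le> d" "z = P x' ((x' - c) * (d - x'))" using z2 by (auto simp: Img_def)
  have xx: "x' = x" using x(3) x'(3) by simp
  have yy: "(x - a) * (b - x) = (x - c) * (d - x)" using x(3) x'(3) xx by simp
  define D where "D y = (y - a) * (b - y) - (y - c) * (d - y)" for y
  have Dx: "D x = 0" using yy by (simp add: D_def)
  have key: "(d - c) * D x = (d - x) * D c + (x - c) * D d" for x
    by (simp add: D_def algebra_simps)
  have key2: "(b - a) * D x = (x - a) * D b + (b - x) * D a" for x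
    by (simp add: D_def algebra_simps)
  show ?thesis
  proof (cases "b \<le> c \<or> d \<le> a")
    case True
    then show ?thesis using x x' xx by (auto simp: Img_def)
  next
    case False
    then have ov: "c < b" "a < d" by auto
    consider "a \<le> c \<and> d \<le> b" | "c \<le> a \<and> b \<le> d" using nc1 nc2 ov ab cd by linarith
    then show ?thesis
    proof cases
      case 1
      have Dc: "D c = (c - a) * (b - c)" and Dd: "D d = (d - a) * (b - d)" by (simp_all add: D_def)
      have Dc0: "D c \<ge> 0" "D d \<ge> 0" using 1 cd by (simp_all add: Dc Dd)
      have s: "(d - x) * D c + (x - c) * D d = 0" using key[of x] Dx by simp
      have t1: "(d - x) * D c = 0" and t2: "(x - c) * D d = 0"
      proof -
        have n1: "0 \<le> (d - x) * D c" using Dc0 x' xx by (intro mult_nonneg_nonneg) auto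
        have n2: "0 \<le> (x - c) * D d" using Dc0 x' xx by (intro mult_nonneg_nonneg) auto
        show "(d - x) * D c = 0" "(x - c) * D d = 0" using s n1 n2 by linarith+
      qed
      show ?thesis
      proof (cases "a < c")
        case True
        then have "D c > 0" using 1 cd by (simp add: Dc)
        then have xd: "x = d" using t1 by simp
        have "d = b"
        proof (rule ccontr)
          assume "d \<noteq> b"
          then have "D d > 0" using 1 True cd by (simp add: Dd)
          then have "x = c" using t2 by simp
          then show False using xd cd by simp
        qed
        then show ?thesis using x xd by auto
      next
        case False
        then have ac: "a = c" using 1 by simp
        then have "d < b" using ne 1 by auto
        then have "D d > 0" using ac cd by (simp add: Dd)
        then have "x = c" using t2 by simp
        then show ?thesis using x ac by auto
      qed
    next
      case 2
      have Da: "D a = - ((a - c) * (d - a))" and Db: "D b = - ((b - c) * (d - b))" by (simp_all add: D_def algebra_simps)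
      have Dc0: "- D a \<ge> 0" "- D b \<ge> 0" using 2 ab by (simp_all add: Da Db)
      have s: "(x - a) * (- D b) + (b - x) * (- D a) = 0" using key2[of x] Dx by simp
      have t1: "(x - a) * (- D b) = 0" and t2: "(b - x) * (- D a) = 0"
      proof -
        have n1: "0 \<le> (x - a) * (- D b)" using Dc0 x by (intro mult_nonneg_nonneg) auto
        have n2: "0 \<le> (b - x) * (- D a)" using Dc0 x by (intro mult_nonneg_nonneg) auto
        show "(x - a) * (- D b) = 0" "(b - x) * (- D a) = 0" using s n1 n2 by linarith+
      qed
      show ?thesis
      proof (cases "c < a")
        case True
        then have "- D a > 0" using 2 ab by (simp add: Da)
        then have xb: "x = b" using t2 by simp
        have "d = b"
        proof (rule ccontr)
          assume "d \<noteq> b"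
          then have "- D b > 0" using 2 True ab by (simp add: Db)
          then have "x = a" using t1 by simp
          then show False using xb ab by simp
        qed
        then show ?thesis using x xb by auto
      next
        case False
        then have ac: "a = c" using 2 by simp
        then have "b < d" using ne 2 by auto
        then have "- D b > 0" using ac ab by (simp add: Db)
        then have "x = a" using t1 by simp
        then show ?thesis using x ac by auto
      qed
    qed
  qed
qed

definition V0 :: "nat set" where "V0 = {0,1,2,3,4,5,6,7,8,9,10,11}"
definition E0 :: "(nat \<times> nat) set" where "E0 = {(0,1),(0,3),(0,4),(0,8),(0,11),(1,2),(1,3),(2,3),(3,4),(4,5),(4,7),(4,8),(5,6),(5,7),(6,7),(7,8),(8,9),(8,11),(9,10),(9,11),(10,11),(1,0),(3,0),(4,0),(8,0),(11,0),(2,1),(3,1),(3,2),(4,3),(5,4),(7,4),(8,4),(6,5),(7,5),(7,6),(8,7),(9,8),(11,8),(10,9),(11,9),(11,10)}"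
definition trk5 :: "nat \<Rightarrow> nat" where "trk5 v = (if v = 0 then 3 else if v = 1 then 0 else if v = 2 then 2 else if v = 3 then 4 else if v = 4 then 0 else if v = 5 then 4 else if v = 6 then 0 else if v = 7 then 2 else if v = 8 then 1 else if v = 9 then 0 else if v = 10 then 4 else if v = 11 then 2 else 0)"
definition El :: "(nat \<times> nat) list" where "El = [(0,1),(0,3),(0,4),(0,8),(0,11),(1,2),(1,3),(2,3),(3,4),(4,5),(4,7),(4,8),(5,6),(5,7),(6,7),(7,8),(8,9),(8,11),(9,10),(9,11),(10,11),(1,0),(3,0),(4,0),(8,0),(11,0),(2,1),(3,1),(3,2),(4,3),(5,4),(7,4),(8,4),(6,5),(7,5),(7,6),(8,7),(9,8),(11,8),(10,9),(11,9),(11,10)]"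
lemma E0_El: "E0 = set El" by (simp add: E0_def El_def)
lemma chk: "list_all (\<lambda>(u,v). list_all (\<lambda>(x,y). trk5 u = trk5 x \<longrightarrow> trk5 v = trk5 y \<longrightarrow> trk5 u \<noteq> trk5 v \<longrightarrow> \<not> (u < x \<and> y < v)) El) El"
  by code_simp
lemma core:
  fixes T :: "nat \<Rightarrow> nat" and L :: "nat \<Rightarrow> nat \<Rightarrow> bool"
  assumes col: "\<And>v. v \<in> V0 \<Longrightarrow> T v < 4"
  and edge: "\<And>u v. (u,v) \<in> E0 \<Longrightarrow> T u \<noteq> T v"
  and tot: "\<And>a b. a\<in>V0 \<Longrightarrow> b\<in>V0 \<Longrightarrow> a\<noteq>b \<Longrightarrow> T a = T b \<Longrightarrow> L a b \<or> L b a"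
  and cr: "\<And>u v x y. (u,v)\<in>E0 \<Longrightarrow> (x,y)\<in>E0 \<Longrightarrow> T u = T x \<Longrightarrow> T v = T y \<Longrightarrow> T u \<noteq> T v \<Longrightarrow> L u x \<Longrightarrow> L y v \<Longrightarrow> False"
  shows False
proof -
  have colC: "T v = 0 \<or> T v = 1 \<or> T v = 2 \<or> T v = 3" if "v \<in> V0" for v
    using col[OF that] by linarith
  have edgeC: "T u \<noteq> k \<or> T v \<noteq> k" if "(u,v) \<in> E0" for u v k
    using edge[OF that] by auto
  have totC: "T a \<noteq> k \<or> T b \<noteq> k \<or> L a b \<or> L b a" if "a \<in> V0" "b \<in> V0" "a \<noteq> b" for a b k
    using tot[OF that] by auto
  have crC: "T u \<noteq> i \<or> T x \<noteq> i \<or> T v \<noteq> j \<or> T y \<noteq> j \<or> \<not> L u x \<or> \<not> L y v"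
    if "(u,v) \<in> E0" "(x,y) \<in> E0" "i \<noteq> j" for u v x y i j
    using cr[OF that(1,2)] that(3) by auto
  have v_0: "0 \<in> V0" by (simp add: V0_def)
  have v_1: "1 \<in> V0" by (simp add: V0_def)
  have v_2: "2 \<in> V0" by (simp add: V0_def)
  have v_3: "3 \<in> V0" by (simp add: V0_def)
  have v_4: "4 \<in> V0" by (simp add: V0_def)
  have v_5: "5 \<in> V0" by (simp add: V0_def)
  have v_6: "6 \<in> V0" by (simp add: V0_def)
  have v_7: "7 \<in> V0" by (simp add: V0_def)
  have v_8: "8 \<in> V0" by (simp add: V0_def)
  have v_9: "9 \<in> V0" by (simp add: V0_def)
  have v_10: "10 \<in> V0" by (simp add: V0_def)
  have v_11: "11 \<in> V0" by (simp add: V0_def)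
  have e_0_1: "(0,1) \<in> E0" by (simp add: E0_def)
  have e_0_3: "(0,3) \<in> E0" by (simp add: E0_def)
  have e_0_4: "(0,4) \<in> E0" by (simp add: E0_def)
  have e_0_8: "(0,8) \<in> E0" by (simp add: E0_def)
  have e_0_11: "(0,11) \<in> E0" by (simp add: E0_def)
  have e_1_2: "(1,2) \<in> E0" by (simp add: E0_def)
  have e_1_3: "(1,3) \<in> E0" by (simp add: E0_def)
  have e_2_3: "(2,3) \<in> E0" by (simp add: E0_def)
  have e_3_4: "(3,4) \<in> E0" by (simp add: E0_def)
  have e_4_5: "(4,5) \<in> E0" by (simp add: E0_def)
  have e_4_7: "(4,7) \<in> E0" by (simp add: E0_def)
  have e_4_8: "(4,8) \<in> E0" by (simp add: E0_def)
  have e_5_6: "(5,6) \<in> E0" by (simp add: E0_def)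
  have e_5_7: "(5,7) \<in> E0" by (simp add: E0_def)
  have e_6_7: "(6,7) \<in> E0" by (simp add: E0_def)
  have e_7_8: "(7,8) \<in> E0" by (simp add: E0_def)
  have e_8_9: "(8,9) \<in> E0" by (simp add: E0_def)
  have e_8_11: "(8,11) \<in> E0" by (simp add: E0_def)
  have e_9_10: "(9,10) \<in> E0" by (simp add: E0_def)
  have e_9_11: "(9,11) \<in> E0" by (simp add: E0_def)
  have e_10_11: "(10,11) \<in> E0" by (simp add: E0_def)
  have e_1_0: "(1,0) \<in> E0" by (simp add: E0_def)
  have e_3_0: "(3,0) \<in> E0" by (simp add: E0_def)
  have e_4_0: "(4,0) \<in> E0" by (simp add: E0_def)
  have e_8_0: "(8,0) \<in> E0" by (simp add: E0_def)
  have e_11_0: "(11,0) \<in> E0" by (simp add: E0_def)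
  have e_2_1: "(2,1) \<in> E0" by (simp add: E0_def)
  have e_3_1: "(3,1) \<in> E0" by (simp add: E0_def)
  have e_3_2: "(3,2) \<in> E0" by (simp add: E0_def)
  have e_4_3: "(4,3) \<in> E0" by (simp add: E0_def)
  have e_5_4: "(5,4) \<in> E0" by (simp add: E0_def)
  have e_7_4: "(7,4) \<in> E0" by (simp add: E0_def)
  have e_8_4: "(8,4) \<in> E0" by (simp add: E0_def)
  have e_6_5: "(6,5) \<in> E0" by (simp add: E0_def)
  have e_7_5: "(7,5) \<in> E0" by (simp add: E0_def)
  have e_7_6: "(7,6) \<in> E0" by (simp add: E0_def)
  have e_8_7: "(8,7) \<in> E0" by (simp add: E0_def)
  have e_9_8: "(9,8) \<in> E0" by (simp add: E0_def)
  have e_11_8: "(11,8) \<in> E0" by (simp add: E0_def)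
  have e_10_9: "(10,9) \<in> E0" by (simp add: E0_def)
  have e_11_9: "(11,9) \<in> E0" by (simp add: E0_def)
  have e_11_10: "(11,10) \<in> E0" by (simp add: E0_def)
  have d_0_1: "(0::nat) \<noteq> 1" by simp
  have d_0_2: "(0::nat) \<noteq> 2" by simp
  have d_0_3: "(0::nat) \<noteq> 3" by simp
  have d_0_4: "(0::nat) \<noteq> 4" by simp
  have d_0_5: "(0::nat) \<noteq> 5" by simp
  have d_0_6: "(0::nat) \<noteq> 6" by simp
  have d_0_7: "(0::nat) \<noteq> 7" by simp
  have d_0_8: "(0::nat) \<noteq> 8" by simp
  have d_0_9: "(0::nat) \<noteq> 9" by simp
  have d_0_10: "(0::nat) \<noteq> 10" by simp
  have d_0_11: "(0::nat) \<noteq> 11" by simp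
  have d_1_0: "(1::nat) \<noteq> 0" by simp
  have d_1_2: "(1::nat) \<noteq> 2" by simp
  have d_1_3: "(1::nat) \<noteq> 3" by simp
  have d_1_4: "(1::nat) \<noteq> 4" by simp
  have d_1_5: "(1::nat) \<noteq> 5" by simp
  have d_1_6: "(1::nat) \<noteq> 6" by simp
  have d_1_7: "(1::nat) \<noteq> 7" by simp
  have d_1_8: "(1::nat) \<noteq> 8" by simp
  have d_1_9: "(1::nat) \<noteq> 9" by simp
  have d_1_10: "(1::nat) \<noteq> 10" by simp
  have d_1_11: "(1::nat) \<noteq> 11" by simp
  have d_2_0: "(2::nat) \<noteq> 0" by simp
  have d_2_1: "(2::nat) \<noteq> 1" by simp
  have d_2_3: "(2::nat) \<noteq> 3" by simp
  have d_2_4: "(2::nat) \<noteq> 4" by simp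
  have d_2_5: "(2::nat) \<noteq> 5" by simp
  have d_2_6: "(2::nat) \<noteq> 6" by simp
  have d_2_7: "(2::nat) \<noteq> 7" by simp
  have d_2_8: "(2::nat) \<noteq> 8" by simp
  have d_2_9: "(2::nat) \<noteq> 9" by simp
  have d_2_10: "(2::nat) \<noteq> 10" by simp
  have d_2_11: "(2::nat) \<noteq> 11" by simp
  have d_3_0: "(3::nat) \<noteq> 0" by simp
  have d_3_1: "(3::nat) \<noteq> 1" by simp
  have d_3_2: "(3::nat) \<noteq> 2" by simp
  have d_3_4: "(3::nat) \<noteq> 4" by simp
  have d_3_5: "(3::nat) \<noteq> 5" by simp
  have d_3_6: "(3::nat) \<noteq> 6" by simp
  have d_3_7: "(3::nat) \<noteq> 7" by simp
  have d_3_8: "(3::nat) \<noteq> 8" by simp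
  have d_3_9: "(3::nat) \<noteq> 9" by simp
  have d_3_10: "(3::nat) \<noteq> 10" by simp
  have d_3_11: "(3::nat) \<noteq> 11" by simp
  have d_4_0: "(4::nat) \<noteq> 0" by simp
  have d_4_1: "(4::nat) \<noteq> 1" by simp
  have d_4_2: "(4::nat) \<noteq> 2" by simp
  have d_4_3: "(4::nat) \<noteq> 3" by simp
  have d_4_5: "(4::nat) \<noteq> 5" by simp
  have d_4_6: "(4::nat) \<noteq> 6" by simp
  have d_4_7: "(4::nat) \<noteq> 7" by simp
  have d_4_8: "(4::nat) \<noteq> 8" by simp
  have d_4_9: "(4::nat) \<noteq> 9" by simp
  have d_4_10: "(4::nat) \<noteq> 10" by simp
  have d_4_11: "(4::nat) \<noteq> 11" by simp
  have d_5_0: "(5::nat) \<noteq> 0" by simp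
  have d_5_1: "(5::nat) \<noteq> 1" by simp
  have d_5_2: "(5::nat) \<noteq> 2" by simp
  have d_5_3: "(5::nat) \<noteq> 3" by simp
  have d_5_4: "(5::nat) \<noteq> 4" by simp
  have d_5_6: "(5::nat) \<noteq> 6" by simp
  have d_5_7: "(5::nat) \<noteq> 7" by simp
  have d_5_8: "(5::nat) \<noteq> 8" by simp
  have d_5_9: "(5::nat) \<noteq> 9" by simp
  have d_5_10: "(5::nat) \<noteq> 10" by simp
  have d_5_11: "(5::nat) \<noteq> 11" by simp
  have d_6_0: "(6::nat) \<noteq> 0" by simp
  have d_6_1: "(6::nat) \<noteq> 1" by simp
  have d_6_2: "(6::nat) \<noteq> 2" by simp
  have d_6_3: "(6::nat) \<noteq> 3" by simp
  have d_6_4: "(6::nat) \<noteq> 4" by simp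
  have d_6_5: "(6::nat) \<noteq> 5" by simp
  have d_6_7: "(6::nat) \<noteq> 7" by simp
  have d_6_8: "(6::nat) \<noteq> 8" by simp
  have d_6_9: "(6::nat) \<noteq> 9" by simp
  have d_6_10: "(6::nat) \<noteq> 10" by simp
  have d_6_11: "(6::nat) \<noteq> 11" by simp
  have d_7_0: "(7::nat) \<noteq> 0" by simp
  have d_7_1: "(7::nat) \<noteq> 1" by simp
  have d_7_2: "(7::nat) \<noteq> 2" by simp
  have d_7_3: "(7::nat) \<noteq> 3" by simp
  have d_7_4: "(7::nat) \<noteq> 4" by simp
  have d_7_5: "(7::nat) \<noteq> 5" by simp
  have d_7_6: "(7::nat) \<noteq> 6" by simp
  have d_7_8: "(7::nat) \<noteq> 8" by simp
  have d_7_9: "(7::nat) \<noteq> 9" by simp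
  have d_7_10: "(7::nat) \<noteq> 10" by simp
  have d_7_11: "(7::nat) \<noteq> 11" by simp
  have d_8_0: "(8::nat) \<noteq> 0" by simp
  have d_8_1: "(8::nat) \<noteq> 1" by simp
  have d_8_2: "(8::nat) \<noteq> 2" by simp
  have d_8_3: "(8::nat) \<noteq> 3" by simp
  have d_8_4: "(8::nat) \<noteq> 4" by simp
  have d_8_5: "(8::nat) \<noteq> 5" by simp
  have d_8_6: "(8::nat) \<noteq> 6" by simp
  have d_8_7: "(8::nat) \<noteq> 7" by simp
  have d_8_9: "(8::nat) \<noteq> 9" by simp
  have d_8_10: "(8::nat) \<noteq> 10" by simp
  have d_8_11: "(8::nat) \<noteq> 11" by simp
  have d_9_0: "(9::nat) \<noteq> 0" by simp
  have d_9_1: "(9::nat) \<noteq> 1" by simp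
  have d_9_2: "(9::nat) \<noteq> 2" by simp
  have d_9_3: "(9::nat) \<noteq> 3" by simp
  have d_9_4: "(9::nat) \<noteq> 4" by simp
  have d_9_5: "(9::nat) \<noteq> 5" by simp
  have d_9_6: "(9::nat) \<noteq> 6" by simp
  have d_9_7: "(9::nat) \<noteq> 7" by simp
  have d_9_8: "(9::nat) \<noteq> 8" by simp
  have d_9_10: "(9::nat) \<noteq> 10" by simp
  have d_9_11: "(9::nat) \<noteq> 11" by simp
  have d_10_0: "(10::nat) \<noteq> 0" by simp
  have d_10_1: "(10::nat) \<noteq> 1" by simp
  have d_10_2: "(10::nat) \<noteq> 2" by simp
  have d_10_3: "(10::nat) \<noteq> 3" by simp
  have d_10_4: "(10::nat) \<noteq> 4" by simp
  have d_10_5: "(10::nat) \<noteq> 5" by simp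
  have d_10_6: "(10::nat) \<noteq> 6" by simp
  have d_10_7: "(10::nat) \<noteq> 7" by simp
  have d_10_8: "(10::nat) \<noteq> 8" by simp
  have d_10_9: "(10::nat) \<noteq> 9" by simp
  have d_10_11: "(10::nat) \<noteq> 11" by simp
  have d_11_0: "(11::nat) \<noteq> 0" by simp
  have d_11_1: "(11::nat) \<noteq> 1" by simp
  have d_11_2: "(11::nat) \<noteq> 2" by simp
  have d_11_3: "(11::nat) \<noteq> 3" by simp
  have d_11_4: "(11::nat) \<noteq> 4" by simp
  have d_11_5: "(11::nat) \<noteq> 5" by simp
  have d_11_6: "(11::nat) \<noteq> 6" by simp
  have d_11_7: "(11::nat) \<noteq> 7" by simp
  have d_11_8: "(11::nat) \<noteq> 8" by simp
  have d_11_9: "(11::nat) \<noteq> 9" by simp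
  have d_11_10: "(11::nat) \<noteq> 10" by simp
  show False using
    colC[OF v_0]
    colC[OF v_1]
    colC[OF v_2]
    colC[OF v_3]
    colC[OF v_4]
    colC[OF v_5]
    colC[OF v_6]
    colC[OF v_7]
    colC[OF v_8]
    colC[OF v_9]
    colC[OF v_10]
    colC[OF v_11]
    edgeC[where k=0, OF e_0_1]
    edgeC[where k=1, OF e_0_1]
    edgeC[where k=2, OF e_0_1]
    edgeC[where k=3, OF e_0_1]
    edgeC[where k=0, OF e_0_3]
    edgeC[where k=1, OF e_0_3]
    edgeC[where k=2, OF e_0_3]
    edgeC[where k=3, OF e_0_3]
    edgeC[where k=0, OF e_0_4]
    edgeC[where k=1, OF e_0_4]
    edgeC[where k=2, OF e_0_4]
    edgeC[where k=3, OF e_0_4]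
    edgeC[where k=0, OF e_0_8]
    edgeC[where k=1, OF e_0_8]
    edgeC[where k=2, OF e_0_8]
    edgeC[where k=3, OF e_0_8]
    edgeC[where k=0, OF e_0_11]
    edgeC[where k=1, OF e_0_11]
    edgeC[where k=2, OF e_0_11]
    edgeC[where k=3, OF e_0_11]
    edgeC[where k=0, OF e_1_2]
    edgeC[where k=1, OF e_1_2]
    edgeC[where k=2, OF e_1_2]
    edgeC[where k=3, OF e_1_2]
    edgeC[where k=0, OF e_1_3]
    edgeC[where k=1, OF e_1_3]
    edgeC[where k=2, OF e_1_3]
    edgeC[where k=3, OF e_1_3]
    edgeC[where k=0, OF e_2_3]
    edgeC[where k=1, OF e_2_3]
    edgeC[where k=2, OF e_2_3]
    edgeC[where k=3, OF e_2_3]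
    edgeC[where k=0, OF e_3_4]
    edgeC[where k=1, OF e_3_4]
    edgeC[where k=2, OF e_3_4]
    edgeC[where k=3, OF e_3_4]
    edgeC[where k=0, OF e_4_5]
    edgeC[where k=1, OF e_4_5]
    edgeC[where k=2, OF e_4_5]
    edgeC[where k=3, OF e_4_5]
    edgeC[where k=0, OF e_4_7]
    edgeC[where k=1, OF e_4_7]
    edgeC[where k=2, OF e_4_7]
    edgeC[where k=3, OF e_4_7]
    edgeC[where k=0, OF e_4_8]
    edgeC[where k=1, OF e_4_8]
    edgeC[where k=2, OF e_4_8]
    edgeC[where k=3, OF e_4_8]
    edgeC[where k=0, OF e_5_6]
    edgeC[where k=1, OF e_5_6]
    edgeC[where k=2, OF e_5_6]
    edgeC[where k=3, OF e_5_6]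
    edgeC[where k=0, OF e_5_7]
    edgeC[where k=1, OF e_5_7]
    edgeC[where k=2, OF e_5_7]
    edgeC[where k=3, OF e_5_7]
    edgeC[where k=0, OF e_6_7]
    edgeC[where k=1, OF e_6_7]
    edgeC[where k=2, OF e_6_7]
    edgeC[where k=3, OF e_6_7]
    edgeC[where k=0, OF e_7_8]
    edgeC[where k=1, OF e_7_8]
    edgeC[where k=2, OF e_7_8]
    edgeC[where k=3, OF e_7_8]
    edgeC[where k=0, OF e_8_9]
    edgeC[where k=1, OF e_8_9]
    edgeC[where k=2, OF e_8_9]
    edgeC[where k=3, OF e_8_9]
    edgeC[where k=0, OF e_8_11]
    edgeC[where k=1, OF e_8_11]
    edgeC[where k=2, OF e_8_11]
    edgeC[where k=3, OF e_8_11]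
    edgeC[where k=0, OF e_9_10]
    edgeC[where k=1, OF e_9_10]
    edgeC[where k=2, OF e_9_10]
    edgeC[where k=3, OF e_9_10]
    edgeC[where k=0, OF e_9_11]
    edgeC[where k=1, OF e_9_11]
    edgeC[where k=2, OF e_9_11]
    edgeC[where k=3, OF e_9_11]
    edgeC[where k=0, OF e_10_11]
    edgeC[where k=1, OF e_10_11]
    edgeC[where k=2, OF e_10_11]
    edgeC[where k=3, OF e_10_11]
    totC[where k=0, OF v_0 v_2 d_0_2]
    totC[where k=1, OF v_0 v_2 d_0_2]
    totC[where k=2, OF v_0 v_2 d_0_2]
    totC[where k=3, OF v_0 v_2 d_0_2]
    totC[where k=0, OF v_0 v_5 d_0_5]
    totC[where k=1, OF v_0 v_5 d_0_5]
    totC[where k=2, OF v_0 v_5 d_0_5]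
    totC[where k=3, OF v_0 v_5 d_0_5]
    totC[where k=0, OF v_0 v_6 d_0_6]
    totC[where k=1, OF v_0 v_6 d_0_6]
    totC[where k=2, OF v_0 v_6 d_0_6]
    totC[where k=3, OF v_0 v_6 d_0_6]
    totC[where k=0, OF v_0 v_7 d_0_7]
    totC[where k=1, OF v_0 v_7 d_0_7]
    totC[where k=2, OF v_0 v_7 d_0_7]
    totC[where k=3, OF v_0 v_7 d_0_7]
    totC[where k=0, OF v_0 v_9 d_0_9]
    totC[where k=1, OF v_0 v_9 d_0_9]
    totC[where k=2, OF v_0 v_9 d_0_9]
    totC[where k=3, OF v_0 v_9 d_0_9]
    totC[where k=0, OF v_1 v_4 d_1_4]
    totC[where k=1, OF v_1 v_4 d_1_4]
    totC[where k=2, OF v_1 v_4 d_1_4]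
    totC[where k=3, OF v_1 v_4 d_1_4]
    totC[where k=0, OF v_1 v_7 d_1_7]
    totC[where k=1, OF v_1 v_7 d_1_7]
    totC[where k=2, OF v_1 v_7 d_1_7]
    totC[where k=3, OF v_1 v_7 d_1_7]
    totC[where k=0, OF v_1 v_8 d_1_8]
    totC[where k=1, OF v_1 v_8 d_1_8]
    totC[where k=2, OF v_1 v_8 d_1_8]
    totC[where k=3, OF v_1 v_8 d_1_8]
    totC[where k=0, OF v_1 v_11 d_1_11]
    totC[where k=1, OF v_1 v_11 d_1_11]
    totC[where k=2, OF v_1 v_11 d_1_11]
    totC[where k=3, OF v_1 v_11 d_1_11]
    totC[where k=0, OF v_2 v_8 d_2_8]
    totC[where k=1, OF v_2 v_8 d_2_8]
    totC[where k=2, OF v_2 v_8 d_2_8]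
    totC[where k=3, OF v_2 v_8 d_2_8]
    totC[where k=0, OF v_3 v_5 d_3_5]
    totC[where k=1, OF v_3 v_5 d_3_5]
    totC[where k=2, OF v_3 v_5 d_3_5]
    totC[where k=3, OF v_3 v_5 d_3_5]
    totC[where k=0, OF v_3 v_7 d_3_7]
    totC[where k=1, OF v_3 v_7 d_3_7]
    totC[where k=2, OF v_3 v_7 d_3_7]
    totC[where k=3, OF v_3 v_7 d_3_7]
    totC[where k=0, OF v_3 v_8 d_3_8]
    totC[where k=1, OF v_3 v_8 d_3_8]
    totC[where k=2, OF v_3 v_8 d_3_8]
    totC[where k=3, OF v_3 v_8 d_3_8]
    totC[where k=0, OF v_3 v_9 d_3_9]
    totC[where k=1, OF v_3 v_9 d_3_9]
    totC[where k=2, OF v_3 v_9 d_3_9]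
    totC[where k=3, OF v_3 v_9 d_3_9]
    totC[where k=0, OF v_3 v_11 d_3_11]
    totC[where k=1, OF v_3 v_11 d_3_11]
    totC[where k=2, OF v_3 v_11 d_3_11]
    totC[where k=3, OF v_3 v_11 d_3_11]
    totC[where k=0, OF v_4 v_6 d_4_6]
    totC[where k=1, OF v_4 v_6 d_4_6]
    totC[where k=2, OF v_4 v_6 d_4_6]
    totC[where k=3, OF v_4 v_6 d_4_6]
    totC[where k=0, OF v_4 v_9 d_4_9]
    totC[where k=1, OF v_4 v_9 d_4_9]
    totC[where k=2, OF v_4 v_9 d_4_9]
    totC[where k=3, OF v_4 v_9 d_4_9]
    totC[where k=0, OF v_4 v_10 d_4_10]
    totC[where k=1, OF v_4 v_10 d_4_10]
    totC[where k=2, OF v_4 v_10 d_4_10]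
    totC[where k=3, OF v_4 v_10 d_4_10]
    totC[where k=0, OF v_4 v_11 d_4_11]
    totC[where k=1, OF v_4 v_11 d_4_11]
    totC[where k=2, OF v_4 v_11 d_4_11]
    totC[where k=3, OF v_4 v_11 d_4_11]
    totC[where k=0, OF v_5 v_8 d_5_8]
    totC[where k=1, OF v_5 v_8 d_5_8]
    totC[where k=2, OF v_5 v_8 d_5_8]
    totC[where k=3, OF v_5 v_8 d_5_8]
    totC[where k=0, OF v_5 v_11 d_5_11]
    totC[where k=1, OF v_5 v_11 d_5_11]
    totC[where k=2, OF v_5 v_11 d_5_11]
    totC[where k=3, OF v_5 v_11 d_5_11]
    totC[where k=0, OF v_7 v_9 d_7_9]
    totC[where k=1, OF v_7 v_9 d_7_9]
    totC[where k=2, OF v_7 v_9 d_7_9]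
    totC[where k=3, OF v_7 v_9 d_7_9]
    totC[where k=0, OF v_7 v_11 d_7_11]
    totC[where k=1, OF v_7 v_11 d_7_11]
    totC[where k=2, OF v_7 v_11 d_7_11]
    totC[where k=3, OF v_7 v_11 d_7_11]
    totC[where k=0, OF v_8 v_10 d_8_10]
    totC[where k=1, OF v_8 v_10 d_8_10]
    totC[where k=2, OF v_8 v_10 d_8_10]
    totC[where k=3, OF v_8 v_10 d_8_10]
    crC[OF e_0_1 e_5_7 d_0_1]
    crC[OF e_0_1 e_5_7 d_0_2]
    crC[OF e_0_1 e_5_7 d_0_3]
    crC[OF e_0_1 e_5_7 d_1_0]
    crC[OF e_0_1 e_5_7 d_1_2]
    crC[OF e_0_1 e_5_7 d_1_3]
    crC[OF e_0_1 e_5_7 d_2_0]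
    crC[OF e_0_1 e_5_7 d_2_1]
    crC[OF e_0_1 e_5_7 d_2_3]
    crC[OF e_0_1 e_5_7 d_3_0]
    crC[OF e_0_1 e_5_7 d_3_1]
    crC[OF e_0_1 e_5_7 d_3_2]
    crC[OF e_0_1 e_7_8 d_0_1]
    crC[OF e_0_1 e_7_8 d_0_2]
    crC[OF e_0_1 e_7_8 d_0_3]
    crC[OF e_0_1 e_7_8 d_1_0]
    crC[OF e_0_1 e_7_8 d_1_2]
    crC[OF e_0_1 e_7_8 d_1_3]
    crC[OF e_0_1 e_7_8 d_2_0]
    crC[OF e_0_1 e_7_8 d_2_1]
    crC[OF e_0_1 e_7_8 d_2_3]
    crC[OF e_0_1 e_7_8 d_3_0]
    crC[OF e_0_1 e_7_8 d_3_1]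
    crC[OF e_0_1 e_7_8 d_3_2]
    crC[OF e_0_1 e_9_11 d_0_1]
    crC[OF e_0_1 e_9_11 d_0_2]
    crC[OF e_0_1 e_9_11 d_0_3]
    crC[OF e_0_1 e_9_11 d_1_0]
    crC[OF e_0_1 e_9_11 d_1_2]
    crC[OF e_0_1 e_9_11 d_1_3]
    crC[OF e_0_1 e_9_11 d_2_0]
    crC[OF e_0_1 e_9_11 d_2_1]
    crC[OF e_0_1 e_9_11 d_2_3]
    crC[OF e_0_1 e_9_11 d_3_0]
    crC[OF e_0_1 e_9_11 d_3_1]
    crC[OF e_0_1 e_9_11 d_3_2]
    crC[OF e_0_1 e_5_4 d_0_1]
    crC[OF e_0_1 e_5_4 d_0_2]
    crC[OF e_0_1 e_5_4 d_0_3]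
    crC[OF e_0_1 e_5_4 d_1_0]
    crC[OF e_0_1 e_5_4 d_1_2]
    crC[OF e_0_1 e_5_4 d_1_3]
    crC[OF e_0_1 e_5_4 d_2_0]
    crC[OF e_0_1 e_5_4 d_2_1]
    crC[OF e_0_1 e_5_4 d_2_3]
    crC[OF e_0_1 e_5_4 d_3_0]
    crC[OF e_0_1 e_5_4 d_3_1]
    crC[OF e_0_1 e_5_4 d_3_2]
    crC[OF e_0_1 e_7_4 d_0_1]
    crC[OF e_0_1 e_7_4 d_0_2]
    crC[OF e_0_1 e_7_4 d_0_3]
    crC[OF e_0_1 e_7_4 d_1_0]
    crC[OF e_0_1 e_7_4 d_1_2]
    crC[OF e_0_1 e_7_4 d_1_3]
    crC[OF e_0_1 e_7_4 d_2_0]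
    crC[OF e_0_1 e_7_4 d_2_1]
    crC[OF e_0_1 e_7_4 d_2_3]
    crC[OF e_0_1 e_7_4 d_3_0]
    crC[OF e_0_1 e_7_4 d_3_1]
    crC[OF e_0_1 e_7_4 d_3_2]
    crC[OF e_0_1 e_9_8 d_0_1]
    crC[OF e_0_1 e_9_8 d_0_2]
    crC[OF e_0_1 e_9_8 d_0_3]
    crC[OF e_0_1 e_9_8 d_1_0]
    crC[OF e_0_1 e_9_8 d_1_2]
    crC[OF e_0_1 e_9_8 d_1_3]
    crC[OF e_0_1 e_9_8 d_2_0]
    crC[OF e_0_1 e_9_8 d_2_1]
    crC[OF e_0_1 e_9_8 d_2_3]
    crC[OF e_0_1 e_9_8 d_3_0]
    crC[OF e_0_1 e_9_8 d_3_1]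
    crC[OF e_0_1 e_9_8 d_3_2]
    crC[OF e_0_3 e_5_7 d_0_1]
    crC[OF e_0_3 e_5_7 d_0_2]
    crC[OF e_0_3 e_5_7 d_0_3]
    crC[OF e_0_3 e_5_7 d_1_0]
    crC[OF e_0_3 e_5_7 d_1_2]
    crC[OF e_0_3 e_5_7 d_1_3]
    crC[OF e_0_3 e_5_7 d_2_0]
    crC[OF e_0_3 e_5_7 d_2_1]
    crC[OF e_0_3 e_5_7 d_2_3]
    crC[OF e_0_3 e_5_7 d_3_0]
    crC[OF e_0_3 e_5_7 d_3_1]
    crC[OF e_0_3 e_5_7 d_3_2]
    crC[OF e_0_3 e_6_7 d_0_1]
    crC[OF e_0_3 e_6_7 d_0_2]
    crC[OF e_0_3 e_6_7 d_0_3]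
    crC[OF e_0_3 e_6_7 d_1_0]
    crC[OF e_0_3 e_6_7 d_1_2]
    crC[OF e_0_3 e_6_7 d_1_3]
    crC[OF e_0_3 e_6_7 d_2_0]
    crC[OF e_0_3 e_6_7 d_2_1]
    crC[OF e_0_3 e_6_7 d_2_3]
    crC[OF e_0_3 e_6_7 d_3_0]
    crC[OF e_0_3 e_6_7 d_3_1]
    crC[OF e_0_3 e_6_7 d_3_2]
    crC[OF e_0_3 e_7_8 d_0_1]
    crC[OF e_0_3 e_7_8 d_0_2]
    crC[OF e_0_3 e_7_8 d_0_3]
    crC[OF e_0_3 e_7_8 d_1_0]
    crC[OF e_0_3 e_7_8 d_1_2]
    crC[OF e_0_3 e_7_8 d_1_3]
    crC[OF e_0_3 e_7_8 d_2_0]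
    crC[OF e_0_3 e_7_8 d_2_1]
    crC[OF e_0_3 e_7_8 d_2_3]
    crC[OF e_0_3 e_7_8 d_3_0]
    crC[OF e_0_3 e_7_8 d_3_1]
    crC[OF e_0_3 e_7_8 d_3_2]
    crC[OF e_0_3 e_9_11 d_0_1]
    crC[OF e_0_3 e_9_11 d_0_2]
    crC[OF e_0_3 e_9_11 d_0_3]
    crC[OF e_0_3 e_9_11 d_1_0]
    crC[OF e_0_3 e_9_11 d_1_2]
    crC[OF e_0_3 e_9_11 d_1_3]
    crC[OF e_0_3 e_9_11 d_2_0]
    crC[OF e_0_3 e_9_11 d_2_1]
    crC[OF e_0_3 e_9_11 d_2_3]
    crC[OF e_0_3 e_9_11 d_3_0]
    crC[OF e_0_3 e_9_11 d_3_1]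
    crC[OF e_0_3 e_9_11 d_3_2]
    crC[OF e_0_3 e_6_5 d_0_1]
    crC[OF e_0_3 e_6_5 d_0_2]
    crC[OF e_0_3 e_6_5 d_0_3]
    crC[OF e_0_3 e_6_5 d_1_0]
    crC[OF e_0_3 e_6_5 d_1_2]
    crC[OF e_0_3 e_6_5 d_1_3]
    crC[OF e_0_3 e_6_5 d_2_0]
    crC[OF e_0_3 e_6_5 d_2_1]
    crC[OF e_0_3 e_6_5 d_2_3]
    crC[OF e_0_3 e_6_5 d_3_0]
    crC[OF e_0_3 e_6_5 d_3_1]
    crC[OF e_0_3 e_6_5 d_3_2]
    crC[OF e_0_4 e_9_10 d_0_1]
    crC[OF e_0_4 e_9_10 d_0_2]
    crC[OF e_0_4 e_9_10 d_0_3]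
    crC[OF e_0_4 e_9_10 d_1_0]
    crC[OF e_0_4 e_9_10 d_1_2]
    crC[OF e_0_4 e_9_10 d_1_3]
    crC[OF e_0_4 e_9_10 d_2_0]
    crC[OF e_0_4 e_9_10 d_2_1]
    crC[OF e_0_4 e_9_10 d_2_3]
    crC[OF e_0_4 e_9_10 d_3_0]
    crC[OF e_0_4 e_9_10 d_3_1]
    crC[OF e_0_4 e_9_10 d_3_2]
    crC[OF e_0_4 e_9_11 d_0_1]
    crC[OF e_0_4 e_9_11 d_0_2]
    crC[OF e_0_4 e_9_11 d_0_3]
    crC[OF e_0_4 e_9_11 d_1_0]
    crC[OF e_0_4 e_9_11 d_1_2]
    crC[OF e_0_4 e_9_11 d_1_3]
    crC[OF e_0_4 e_9_11 d_2_0]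
    crC[OF e_0_4 e_9_11 d_2_1]
    crC[OF e_0_4 e_9_11 d_2_3]
    crC[OF e_0_4 e_9_11 d_3_0]
    crC[OF e_0_4 e_9_11 d_3_1]
    crC[OF e_0_4 e_9_11 d_3_2]
    crC[OF e_0_4 e_2_1 d_0_1]
    crC[OF e_0_4 e_2_1 d_0_2]
    crC[OF e_0_4 e_2_1 d_0_3]
    crC[OF e_0_4 e_2_1 d_1_0]
    crC[OF e_0_4 e_2_1 d_1_2]
    crC[OF e_0_4 e_2_1 d_1_3]
    crC[OF e_0_4 e_2_1 d_2_0]
    crC[OF e_0_4 e_2_1 d_2_1]
    crC[OF e_0_4 e_2_1 d_2_3]
    crC[OF e_0_4 e_2_1 d_3_0]
    crC[OF e_0_4 e_2_1 d_3_1]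
    crC[OF e_0_4 e_2_1 d_3_2]
    crC[OF e_0_8 e_9_10 d_0_1]
    crC[OF e_0_8 e_9_10 d_0_2]
    crC[OF e_0_8 e_9_10 d_0_3]
    crC[OF e_0_8 e_9_10 d_1_0]
    crC[OF e_0_8 e_9_10 d_1_2]
    crC[OF e_0_8 e_9_10 d_1_3]
    crC[OF e_0_8 e_9_10 d_2_0]
    crC[OF e_0_8 e_9_10 d_2_1]
    crC[OF e_0_8 e_9_10 d_2_3]
    crC[OF e_0_8 e_9_10 d_3_0]
    crC[OF e_0_8 e_9_10 d_3_1]
    crC[OF e_0_8 e_9_10 d_3_2]
    crC[OF e_0_8 e_6_5 d_0_1]
    crC[OF e_0_8 e_6_5 d_0_2]
    crC[OF e_0_8 e_6_5 d_0_3]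
    crC[OF e_0_8 e_6_5 d_1_0]
    crC[OF e_0_8 e_6_5 d_1_2]
    crC[OF e_0_8 e_6_5 d_1_3]
    crC[OF e_0_8 e_6_5 d_2_0]
    crC[OF e_0_8 e_6_5 d_2_1]
    crC[OF e_0_8 e_6_5 d_2_3]
    crC[OF e_0_8 e_6_5 d_3_0]
    crC[OF e_0_8 e_6_5 d_3_1]
    crC[OF e_0_8 e_6_5 d_3_2]
    crC[OF e_1_2 e_4_8 d_0_1]
    crC[OF e_1_2 e_4_8 d_0_2]
    crC[OF e_1_2 e_4_8 d_0_3]
    crC[OF e_1_2 e_4_8 d_1_0]
    crC[OF e_1_2 e_4_8 d_1_2]
    crC[OF e_1_2 e_4_8 d_1_3]
    crC[OF e_1_2 e_4_8 d_2_0]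
    crC[OF e_1_2 e_4_8 d_2_1]
    crC[OF e_1_2 e_4_8 d_2_3]
    crC[OF e_1_2 e_4_8 d_3_0]
    crC[OF e_1_2 e_4_8 d_3_1]
    crC[OF e_1_2 e_4_8 d_3_2]
    crC[OF e_1_2 e_11_0 d_0_1]
    crC[OF e_1_2 e_11_0 d_0_2]
    crC[OF e_1_2 e_11_0 d_0_3]
    crC[OF e_1_2 e_11_0 d_1_0]
    crC[OF e_1_2 e_11_0 d_1_2]
    crC[OF e_1_2 e_11_0 d_1_3]
    crC[OF e_1_2 e_11_0 d_2_0]
    crC[OF e_1_2 e_11_0 d_2_1]
    crC[OF e_1_2 e_11_0 d_2_3]
    crC[OF e_1_2 e_11_0 d_3_0]
    crC[OF e_1_2 e_11_0 d_3_1]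
    crC[OF e_1_2 e_11_0 d_3_2]
    crC[OF e_1_2 e_11_8 d_0_1]
    crC[OF e_1_2 e_11_8 d_0_2]
    crC[OF e_1_2 e_11_8 d_0_3]
    crC[OF e_1_2 e_11_8 d_1_0]
    crC[OF e_1_2 e_11_8 d_1_2]
    crC[OF e_1_2 e_11_8 d_1_3]
    crC[OF e_1_2 e_11_8 d_2_0]
    crC[OF e_1_2 e_11_8 d_2_1]
    crC[OF e_1_2 e_11_8 d_2_3]
    crC[OF e_1_2 e_11_8 d_3_0]
    crC[OF e_1_2 e_11_8 d_3_1]
    crC[OF e_1_2 e_11_8 d_3_2]
    crC[OF e_1_3 e_4_5 d_0_1]
    crC[OF e_1_3 e_4_5 d_0_2]
    crC[OF e_1_3 e_4_5 d_0_3]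
    crC[OF e_1_3 e_4_5 d_1_0]
    crC[OF e_1_3 e_4_5 d_1_2]
    crC[OF e_1_3 e_4_5 d_1_3]
    crC[OF e_1_3 e_4_5 d_2_0]
    crC[OF e_1_3 e_4_5 d_2_1]
    crC[OF e_1_3 e_4_5 d_2_3]
    crC[OF e_1_3 e_4_5 d_3_0]
    crC[OF e_1_3 e_4_5 d_3_1]
    crC[OF e_1_3 e_4_5 d_3_2]
    crC[OF e_1_3 e_4_8 d_0_1]
    crC[OF e_1_3 e_4_8 d_0_2]
    crC[OF e_1_3 e_4_8 d_0_3]
    crC[OF e_1_3 e_4_8 d_1_0]
    crC[OF e_1_3 e_4_8 d_1_2]
    crC[OF e_1_3 e_4_8 d_1_3]
    crC[OF e_1_3 e_4_8 d_2_0]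
    crC[OF e_1_3 e_4_8 d_2_1]
    crC[OF e_1_3 e_4_8 d_2_3]
    crC[OF e_1_3 e_4_8 d_3_0]
    crC[OF e_1_3 e_4_8 d_3_1]
    crC[OF e_1_3 e_4_8 d_3_2]
    crC[OF e_1_3 e_7_8 d_0_1]
    crC[OF e_1_3 e_7_8 d_0_2]
    crC[OF e_1_3 e_7_8 d_0_3]
    crC[OF e_1_3 e_7_8 d_1_0]
    crC[OF e_1_3 e_7_8 d_1_2]
    crC[OF e_1_3 e_7_8 d_1_3]
    crC[OF e_1_3 e_7_8 d_2_0]
    crC[OF e_1_3 e_7_8 d_2_1]
    crC[OF e_1_3 e_7_8 d_2_3]
    crC[OF e_1_3 e_7_8 d_3_0]
    crC[OF e_1_3 e_7_8 d_3_1]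
    crC[OF e_1_3 e_7_8 d_3_2]
    crC[OF e_1_3 e_8_9 d_0_1]
    crC[OF e_1_3 e_8_9 d_0_2]
    crC[OF e_1_3 e_8_9 d_0_3]
    crC[OF e_1_3 e_8_9 d_1_0]
    crC[OF e_1_3 e_8_9 d_1_2]
    crC[OF e_1_3 e_8_9 d_1_3]
    crC[OF e_1_3 e_8_9 d_2_0]
    crC[OF e_1_3 e_8_9 d_2_1]
    crC[OF e_1_3 e_8_9 d_2_3]
    crC[OF e_1_3 e_8_9 d_3_0]
    crC[OF e_1_3 e_8_9 d_3_1]
    crC[OF e_1_3 e_8_9 d_3_2]
    crC[OF e_1_3 e_7_5 d_0_1]
    crC[OF e_1_3 e_7_5 d_0_2]
    crC[OF e_1_3 e_7_5 d_0_3]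
    crC[OF e_1_3 e_7_5 d_1_0]
    crC[OF e_1_3 e_7_5 d_1_2]
    crC[OF e_1_3 e_7_5 d_1_3]
    crC[OF e_1_3 e_7_5 d_2_0]
    crC[OF e_1_3 e_7_5 d_2_1]
    crC[OF e_1_3 e_7_5 d_2_3]
    crC[OF e_1_3 e_7_5 d_3_0]
    crC[OF e_1_3 e_7_5 d_3_1]
    crC[OF e_1_3 e_7_5 d_3_2]
    crC[OF e_1_3 e_8_7 d_0_1]
    crC[OF e_1_3 e_8_7 d_0_2]
    crC[OF e_1_3 e_8_7 d_0_3]
    crC[OF e_1_3 e_8_7 d_1_0]
    crC[OF e_1_3 e_8_7 d_1_2]
    crC[OF e_1_3 e_8_7 d_1_3]
    crC[OF e_1_3 e_8_7 d_2_0]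
    crC[OF e_1_3 e_8_7 d_2_1]
    crC[OF e_1_3 e_8_7 d_2_3]
    crC[OF e_1_3 e_8_7 d_3_0]
    crC[OF e_1_3 e_8_7 d_3_1]
    crC[OF e_1_3 e_8_7 d_3_2]
    crC[OF e_1_3 e_11_9 d_0_1]
    crC[OF e_1_3 e_11_9 d_0_2]
    crC[OF e_1_3 e_11_9 d_0_3]
    crC[OF e_1_3 e_11_9 d_1_0]
    crC[OF e_1_3 e_11_9 d_1_2]
    crC[OF e_1_3 e_11_9 d_1_3]
    crC[OF e_1_3 e_11_9 d_2_0]
    crC[OF e_1_3 e_11_9 d_2_1]
    crC[OF e_1_3 e_11_9 d_2_3]
    crC[OF e_1_3 e_11_9 d_3_0]
    crC[OF e_1_3 e_11_9 d_3_1]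
    crC[OF e_1_3 e_11_9 d_3_2]
    crC[OF e_2_3 e_8_11 d_0_1]
    crC[OF e_2_3 e_8_11 d_0_2]
    crC[OF e_2_3 e_8_11 d_0_3]
    crC[OF e_2_3 e_8_11 d_1_0]
    crC[OF e_2_3 e_8_11 d_1_2]
    crC[OF e_2_3 e_8_11 d_1_3]
    crC[OF e_2_3 e_8_11 d_2_0]
    crC[OF e_2_3 e_8_11 d_2_1]
    crC[OF e_2_3 e_8_11 d_2_3]
    crC[OF e_2_3 e_8_11 d_3_0]
    crC[OF e_2_3 e_8_11 d_3_1]
    crC[OF e_2_3 e_8_11 d_3_2]
    crC[OF e_3_4 e_5_6 d_0_1]
    crC[OF e_3_4 e_5_6 d_0_2]
    crC[OF e_3_4 e_5_6 d_0_3]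
    crC[OF e_3_4 e_5_6 d_1_0]
    crC[OF e_3_4 e_5_6 d_1_2]
    crC[OF e_3_4 e_5_6 d_1_3]
    crC[OF e_3_4 e_5_6 d_2_0]
    crC[OF e_3_4 e_5_6 d_2_1]
    crC[OF e_3_4 e_5_6 d_2_3]
    crC[OF e_3_4 e_5_6 d_3_0]
    crC[OF e_3_4 e_5_6 d_3_1]
    crC[OF e_3_4 e_5_6 d_3_2]
    crC[OF e_3_4 e_8_9 d_0_1]
    crC[OF e_3_4 e_8_9 d_0_2]
    crC[OF e_3_4 e_8_9 d_0_3]
    crC[OF e_3_4 e_8_9 d_1_0]
    crC[OF e_3_4 e_8_9 d_1_2]
    crC[OF e_3_4 e_8_9 d_1_3]
    crC[OF e_3_4 e_8_9 d_2_0]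
    crC[OF e_3_4 e_8_9 d_2_1]
    crC[OF e_3_4 e_8_9 d_2_3]
    crC[OF e_3_4 e_8_9 d_3_0]
    crC[OF e_3_4 e_8_9 d_3_1]
    crC[OF e_3_4 e_8_9 d_3_2]
    crC[OF e_3_4 e_8_11 d_0_1]
    crC[OF e_3_4 e_8_11 d_0_2]
    crC[OF e_3_4 e_8_11 d_0_3]
    crC[OF e_3_4 e_8_11 d_1_0]
    crC[OF e_3_4 e_8_11 d_1_2]
    crC[OF e_3_4 e_8_11 d_1_3]
    crC[OF e_3_4 e_8_11 d_2_0]
    crC[OF e_3_4 e_8_11 d_2_1]
    crC[OF e_3_4 e_8_11 d_2_3]
    crC[OF e_3_4 e_8_11 d_3_0]
    crC[OF e_3_4 e_8_11 d_3_1]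
    crC[OF e_3_4 e_8_11 d_3_2]
    crC[OF e_3_4 e_9_11 d_0_1]
    crC[OF e_3_4 e_9_11 d_0_2]
    crC[OF e_3_4 e_9_11 d_0_3]
    crC[OF e_3_4 e_9_11 d_1_0]
    crC[OF e_3_4 e_9_11 d_1_2]
    crC[OF e_3_4 e_9_11 d_1_3]
    crC[OF e_3_4 e_9_11 d_2_0]
    crC[OF e_3_4 e_9_11 d_2_1]
    crC[OF e_3_4 e_9_11 d_2_3]
    crC[OF e_3_4 e_9_11 d_3_0]
    crC[OF e_3_4 e_9_11 d_3_1]
    crC[OF e_3_4 e_9_11 d_3_2]
    crC[OF e_3_4 e_7_6 d_0_1]
    crC[OF e_3_4 e_7_6 d_0_2]
    crC[OF e_3_4 e_7_6 d_0_3]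
    crC[OF e_3_4 e_7_6 d_1_0]
    crC[OF e_3_4 e_7_6 d_1_2]
    crC[OF e_3_4 e_7_6 d_1_3]
    crC[OF e_3_4 e_7_6 d_2_0]
    crC[OF e_3_4 e_7_6 d_2_1]
    crC[OF e_3_4 e_7_6 d_2_3]
    crC[OF e_3_4 e_7_6 d_3_0]
    crC[OF e_3_4 e_7_6 d_3_1]
    crC[OF e_3_4 e_7_6 d_3_2]
    crC[OF e_4_5 e_9_11 d_0_1]
    crC[OF e_4_5 e_9_11 d_0_2]
    crC[OF e_4_5 e_9_11 d_0_3]
    crC[OF e_4_5 e_9_11 d_1_0]
    crC[OF e_4_5 e_9_11 d_1_2]
    crC[OF e_4_5 e_9_11 d_1_3]
    crC[OF e_4_5 e_9_11 d_2_0]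
    crC[OF e_4_5 e_9_11 d_2_1]
    crC[OF e_4_5 e_9_11 d_2_3]
    crC[OF e_4_5 e_9_11 d_3_0]
    crC[OF e_4_5 e_9_11 d_3_1]
    crC[OF e_4_5 e_9_11 d_3_2]
    crC[OF e_4_5 e_11_0 d_0_1]
    crC[OF e_4_5 e_11_0 d_0_2]
    crC[OF e_4_5 e_11_0 d_0_3]
    crC[OF e_4_5 e_11_0 d_1_0]
    crC[OF e_4_5 e_11_0 d_1_2]
    crC[OF e_4_5 e_11_0 d_1_3]
    crC[OF e_4_5 e_11_0 d_2_0]
    crC[OF e_4_5 e_11_0 d_2_1]
    crC[OF e_4_5 e_11_0 d_2_3]
    crC[OF e_4_5 e_11_0 d_3_0]
    crC[OF e_4_5 e_11_0 d_3_1]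
    crC[OF e_4_5 e_11_0 d_3_2]
    crC[OF e_4_5 e_11_8 d_0_1]
    crC[OF e_4_5 e_11_8 d_0_2]
    crC[OF e_4_5 e_11_8 d_0_3]
    crC[OF e_4_5 e_11_8 d_1_0]
    crC[OF e_4_5 e_11_8 d_1_2]
    crC[OF e_4_5 e_11_8 d_1_3]
    crC[OF e_4_5 e_11_8 d_2_0]
    crC[OF e_4_5 e_11_8 d_2_1]
    crC[OF e_4_5 e_11_8 d_2_3]
    crC[OF e_4_5 e_11_8 d_3_0]
    crC[OF e_4_5 e_11_8 d_3_1]
    crC[OF e_4_5 e_11_8 d_3_2]
    crC[OF e_4_7 e_9_11 d_0_1]
    crC[OF e_4_7 e_9_11 d_0_2]
    crC[OF e_4_7 e_9_11 d_0_3]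
    crC[OF e_4_7 e_9_11 d_1_0]
    crC[OF e_4_7 e_9_11 d_1_2]
    crC[OF e_4_7 e_9_11 d_1_3]
    crC[OF e_4_7 e_9_11 d_2_0]
    crC[OF e_4_7 e_9_11 d_2_1]
    crC[OF e_4_7 e_9_11 d_2_3]
    crC[OF e_4_7 e_9_11 d_3_0]
    crC[OF e_4_7 e_9_11 d_3_1]
    crC[OF e_4_7 e_9_11 d_3_2]
    crC[OF e_4_7 e_10_11 d_0_1]
    crC[OF e_4_7 e_10_11 d_0_2]
    crC[OF e_4_7 e_10_11 d_0_3]
    crC[OF e_4_7 e_10_11 d_1_0]
    crC[OF e_4_7 e_10_11 d_1_2]
    crC[OF e_4_7 e_10_11 d_1_3]
    crC[OF e_4_7 e_10_11 d_2_0]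
    crC[OF e_4_7 e_10_11 d_2_1]
    crC[OF e_4_7 e_10_11 d_2_3]
    crC[OF e_4_7 e_10_11 d_3_0]
    crC[OF e_4_7 e_10_11 d_3_1]
    crC[OF e_4_7 e_10_11 d_3_2]
    crC[OF e_4_7 e_11_0 d_0_1]
    crC[OF e_4_7 e_11_0 d_0_2]
    crC[OF e_4_7 e_11_0 d_0_3]
    crC[OF e_4_7 e_11_0 d_1_0]
    crC[OF e_4_7 e_11_0 d_1_2]
    crC[OF e_4_7 e_11_0 d_1_3]
    crC[OF e_4_7 e_11_0 d_2_0]
    crC[OF e_4_7 e_11_0 d_2_1]
    crC[OF e_4_7 e_11_0 d_2_3]
    crC[OF e_4_7 e_11_0 d_3_0]
    crC[OF e_4_7 e_11_0 d_3_1]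
    crC[OF e_4_7 e_11_0 d_3_2]
    crC[OF e_4_7 e_10_9 d_0_1]
    crC[OF e_4_7 e_10_9 d_0_2]
    crC[OF e_4_7 e_10_9 d_0_3]
    crC[OF e_4_7 e_10_9 d_1_0]
    crC[OF e_4_7 e_10_9 d_1_2]
    crC[OF e_4_7 e_10_9 d_1_3]
    crC[OF e_4_7 e_10_9 d_2_0]
    crC[OF e_4_7 e_10_9 d_2_1]
    crC[OF e_4_7 e_10_9 d_2_3]
    crC[OF e_4_7 e_10_9 d_3_0]
    crC[OF e_4_7 e_10_9 d_3_1]
    crC[OF e_4_7 e_10_9 d_3_2]
    crC[OF e_4_8 e_6_5 d_0_1]
    crC[OF e_4_8 e_6_5 d_0_2]
    crC[OF e_4_8 e_6_5 d_0_3]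
    crC[OF e_4_8 e_6_5 d_1_0]
    crC[OF e_4_8 e_6_5 d_1_2]
    crC[OF e_4_8 e_6_5 d_1_3]
    crC[OF e_4_8 e_6_5 d_2_0]
    crC[OF e_4_8 e_6_5 d_2_1]
    crC[OF e_4_8 e_6_5 d_2_3]
    crC[OF e_4_8 e_6_5 d_3_0]
    crC[OF e_4_8 e_6_5 d_3_1]
    crC[OF e_4_8 e_6_5 d_3_2]
    crC[OF e_5_7 e_8_11 d_0_1]
    crC[OF e_5_7 e_8_11 d_0_2]
    crC[OF e_5_7 e_8_11 d_0_3]
    crC[OF e_5_7 e_8_11 d_1_0]
    crC[OF e_5_7 e_8_11 d_1_2]
    crC[OF e_5_7 e_8_11 d_1_3]
    crC[OF e_5_7 e_8_11 d_2_0]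
    crC[OF e_5_7 e_8_11 d_2_1]
    crC[OF e_5_7 e_8_11 d_2_3]
    crC[OF e_5_7 e_8_11 d_3_0]
    crC[OF e_5_7 e_8_11 d_3_1]
    crC[OF e_5_7 e_8_11 d_3_2]
    crC[OF e_5_7 e_8_0 d_0_1]
    crC[OF e_5_7 e_8_0 d_0_2]
    crC[OF e_5_7 e_8_0 d_0_3]
    crC[OF e_5_7 e_8_0 d_1_0]
    crC[OF e_5_7 e_8_0 d_1_2]
    crC[OF e_5_7 e_8_0 d_1_3]
    crC[OF e_5_7 e_8_0 d_2_0]
    crC[OF e_5_7 e_8_0 d_2_1]
    crC[OF e_5_7 e_8_0 d_2_3]
    crC[OF e_5_7 e_8_0 d_3_0]
    crC[OF e_5_7 e_8_0 d_3_1]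
    crC[OF e_5_7 e_8_0 d_3_2]
    crC[OF e_5_7 e_11_0 d_0_1]
    crC[OF e_5_7 e_11_0 d_0_2]
    crC[OF e_5_7 e_11_0 d_0_3]
    crC[OF e_5_7 e_11_0 d_1_0]
    crC[OF e_5_7 e_11_0 d_1_2]
    crC[OF e_5_7 e_11_0 d_1_3]
    crC[OF e_5_7 e_11_0 d_2_0]
    crC[OF e_5_7 e_11_0 d_2_1]
    crC[OF e_5_7 e_11_0 d_2_3]
    crC[OF e_5_7 e_11_0 d_3_0]
    crC[OF e_5_7 e_11_0 d_3_1]
    crC[OF e_5_7 e_11_0 d_3_2]
    crC[OF e_5_7 e_11_9 d_0_1]
    crC[OF e_5_7 e_11_9 d_0_2]
    crC[OF e_5_7 e_11_9 d_0_3]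
    crC[OF e_5_7 e_11_9 d_1_0]
    crC[OF e_5_7 e_11_9 d_1_2]
    crC[OF e_5_7 e_11_9 d_1_3]
    crC[OF e_5_7 e_11_9 d_2_0]
    crC[OF e_5_7 e_11_9 d_2_1]
    crC[OF e_5_7 e_11_9 d_2_3]
    crC[OF e_5_7 e_11_9 d_3_0]
    crC[OF e_5_7 e_11_9 d_3_1]
    crC[OF e_5_7 e_11_9 d_3_2]
    crC[OF e_7_8 e_9_10 d_0_1]
    crC[OF e_7_8 e_9_10 d_0_2]
    crC[OF e_7_8 e_9_10 d_0_3]
    crC[OF e_7_8 e_9_10 d_1_0]
    crC[OF e_7_8 e_9_10 d_1_2]
    crC[OF e_7_8 e_9_10 d_1_3]
    crC[OF e_7_8 e_9_10 d_2_0]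
    crC[OF e_7_8 e_9_10 d_2_1]
    crC[OF e_7_8 e_9_10 d_2_3]
    crC[OF e_7_8 e_9_10 d_3_0]
    crC[OF e_7_8 e_9_10 d_3_1]
    crC[OF e_7_8 e_9_10 d_3_2]
    crC[OF e_7_8 e_11_10 d_0_1]
    crC[OF e_7_8 e_11_10 d_0_2]
    crC[OF e_7_8 e_11_10 d_0_3]
    crC[OF e_7_8 e_11_10 d_1_0]
    crC[OF e_7_8 e_11_10 d_1_2]
    crC[OF e_7_8 e_11_10 d_1_3]
    crC[OF e_7_8 e_11_10 d_2_0]
    crC[OF e_7_8 e_11_10 d_2_1]
    crC[OF e_7_8 e_11_10 d_2_3]
    crC[OF e_7_8 e_11_10 d_3_0]
    crC[OF e_7_8 e_11_10 d_3_1]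
    crC[OF e_7_8 e_11_10 d_3_2]
    crC[OF e_8_9 e_3_0 d_0_1]
    crC[OF e_8_9 e_3_0 d_0_2]
    crC[OF e_8_9 e_3_0 d_0_3]
    crC[OF e_8_9 e_3_0 d_1_0]
    crC[OF e_8_9 e_3_0 d_1_2]
    crC[OF e_8_9 e_3_0 d_1_3]
    crC[OF e_8_9 e_3_0 d_2_0]
    crC[OF e_8_9 e_3_0 d_2_1]
    crC[OF e_8_9 e_3_0 d_2_3]
    crC[OF e_8_9 e_3_0 d_3_0]
    crC[OF e_8_9 e_3_0 d_3_1]
    crC[OF e_8_9 e_3_0 d_3_2]
    crC[OF e_8_9 e_5_4 d_0_1]
    crC[OF e_8_9 e_5_4 d_0_2]
    crC[OF e_8_9 e_5_4 d_0_3]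
    crC[OF e_8_9 e_5_4 d_1_0]
    crC[OF e_8_9 e_5_4 d_1_2]
    crC[OF e_8_9 e_5_4 d_1_3]
    crC[OF e_8_9 e_5_4 d_2_0]
    crC[OF e_8_9 e_5_4 d_2_1]
    crC[OF e_8_9 e_5_4 d_2_3]
    crC[OF e_8_9 e_5_4 d_3_0]
    crC[OF e_8_9 e_5_4 d_3_1]
    crC[OF e_8_9 e_5_4 d_3_2]
    crC[OF e_9_11 e_4_3 d_0_1]
    crC[OF e_9_11 e_4_3 d_0_2]
    crC[OF e_9_11 e_4_3 d_0_3]
    crC[OF e_9_11 e_4_3 d_1_0]
    crC[OF e_9_11 e_4_3 d_1_2]
    crC[OF e_9_11 e_4_3 d_1_3]
    crC[OF e_9_11 e_4_3 d_2_0]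
    crC[OF e_9_11 e_4_3 d_2_1]
    crC[OF e_9_11 e_4_3 d_2_3]
    crC[OF e_9_11 e_4_3 d_3_0]
    crC[OF e_9_11 e_4_3 d_3_1]
    crC[OF e_9_11 e_4_3 d_3_2]
    crC[OF e_1_0 e_4_5 d_0_1]
    crC[OF e_1_0 e_4_5 d_0_2]
    crC[OF e_1_0 e_4_5 d_0_3]
    crC[OF e_1_0 e_4_5 d_1_0]
    crC[OF e_1_0 e_4_5 d_1_2]
    crC[OF e_1_0 e_4_5 d_1_3]
    crC[OF e_1_0 e_4_5 d_2_0]
    crC[OF e_1_0 e_4_5 d_2_1]
    crC[OF e_1_0 e_4_5 d_2_3]
    crC[OF e_1_0 e_4_5 d_3_0]
    crC[OF e_1_0 e_4_5 d_3_1]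
    crC[OF e_1_0 e_4_5 d_3_2]
    crC[OF e_1_0 e_4_7 d_0_1]
    crC[OF e_1_0 e_4_7 d_0_2]
    crC[OF e_1_0 e_4_7 d_0_3]
    crC[OF e_1_0 e_4_7 d_1_0]
    crC[OF e_1_0 e_4_7 d_1_2]
    crC[OF e_1_0 e_4_7 d_1_3]
    crC[OF e_1_0 e_4_7 d_2_0]
    crC[OF e_1_0 e_4_7 d_2_1]
    crC[OF e_1_0 e_4_7 d_2_3]
    crC[OF e_1_0 e_4_7 d_3_0]
    crC[OF e_1_0 e_4_7 d_3_1]
    crC[OF e_1_0 e_4_7 d_3_2]
    crC[OF e_1_0 e_8_9 d_0_1]
    crC[OF e_1_0 e_8_9 d_0_2]
    crC[OF e_1_0 e_8_9 d_0_3]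
    crC[OF e_1_0 e_8_9 d_1_0]
    crC[OF e_1_0 e_8_9 d_1_2]
    crC[OF e_1_0 e_8_9 d_1_3]
    crC[OF e_1_0 e_8_9 d_2_0]
    crC[OF e_1_0 e_8_9 d_2_1]
    crC[OF e_1_0 e_8_9 d_2_3]
    crC[OF e_1_0 e_8_9 d_3_0]
    crC[OF e_1_0 e_8_9 d_3_1]
    crC[OF e_1_0 e_8_9 d_3_2]
    crC[OF e_1_0 e_7_5 d_0_1]
    crC[OF e_1_0 e_7_5 d_0_2]
    crC[OF e_1_0 e_7_5 d_0_3]
    crC[OF e_1_0 e_7_5 d_1_0]
    crC[OF e_1_0 e_7_5 d_1_2]
    crC[OF e_1_0 e_7_5 d_1_3]
    crC[OF e_1_0 e_7_5 d_2_0]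
    crC[OF e_1_0 e_7_5 d_2_1]
    crC[OF e_1_0 e_7_5 d_2_3]
    crC[OF e_1_0 e_7_5 d_3_0]
    crC[OF e_1_0 e_7_5 d_3_1]
    crC[OF e_1_0 e_7_5 d_3_2]
    crC[OF e_1_0 e_8_7 d_0_1]
    crC[OF e_1_0 e_8_7 d_0_2]
    crC[OF e_1_0 e_8_7 d_0_3]
    crC[OF e_1_0 e_8_7 d_1_0]
    crC[OF e_1_0 e_8_7 d_1_2]
    crC[OF e_1_0 e_8_7 d_1_3]
    crC[OF e_1_0 e_8_7 d_2_0]
    crC[OF e_1_0 e_8_7 d_2_1]
    crC[OF e_1_0 e_8_7 d_2_3]
    crC[OF e_1_0 e_8_7 d_3_0]
    crC[OF e_1_0 e_8_7 d_3_1]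
    crC[OF e_1_0 e_8_7 d_3_2]
    crC[OF e_1_0 e_11_9 d_0_1]
    crC[OF e_1_0 e_11_9 d_0_2]
    crC[OF e_1_0 e_11_9 d_0_3]
    crC[OF e_1_0 e_11_9 d_1_0]
    crC[OF e_1_0 e_11_9 d_1_2]
    crC[OF e_1_0 e_11_9 d_1_3]
    crC[OF e_1_0 e_11_9 d_2_0]
    crC[OF e_1_0 e_11_9 d_2_1]
    crC[OF e_1_0 e_11_9 d_2_3]
    crC[OF e_1_0 e_11_9 d_3_0]
    crC[OF e_1_0 e_11_9 d_3_1]
    crC[OF e_1_0 e_11_9 d_3_2]
    crC[OF e_3_0 e_5_6 d_0_1]
    crC[OF e_3_0 e_5_6 d_0_2]
    crC[OF e_3_0 e_5_6 d_0_3]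
    crC[OF e_3_0 e_5_6 d_1_0]
    crC[OF e_3_0 e_5_6 d_1_2]
    crC[OF e_3_0 e_5_6 d_1_3]
    crC[OF e_3_0 e_5_6 d_2_0]
    crC[OF e_3_0 e_5_6 d_2_1]
    crC[OF e_3_0 e_5_6 d_2_3]
    crC[OF e_3_0 e_5_6 d_3_0]
    crC[OF e_3_0 e_5_6 d_3_1]
    crC[OF e_3_0 e_5_6 d_3_2]
    crC[OF e_3_0 e_8_9 d_0_1]
    crC[OF e_3_0 e_8_9 d_0_2]
    crC[OF e_3_0 e_8_9 d_0_3]
    crC[OF e_3_0 e_8_9 d_1_0]
    crC[OF e_3_0 e_8_9 d_1_2]
    crC[OF e_3_0 e_8_9 d_1_3]
    crC[OF e_3_0 e_8_9 d_2_0]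
    crC[OF e_3_0 e_8_9 d_2_1]
    crC[OF e_3_0 e_8_9 d_2_3]
    crC[OF e_3_0 e_8_9 d_3_0]
    crC[OF e_3_0 e_8_9 d_3_1]
    crC[OF e_3_0 e_8_9 d_3_2]
    crC[OF e_3_0 e_7_5 d_0_1]
    crC[OF e_3_0 e_7_5 d_0_2]
    crC[OF e_3_0 e_7_5 d_0_3]
    crC[OF e_3_0 e_7_5 d_1_0]
    crC[OF e_3_0 e_7_5 d_1_2]
    crC[OF e_3_0 e_7_5 d_1_3]
    crC[OF e_3_0 e_7_5 d_2_0]
    crC[OF e_3_0 e_7_5 d_2_1]
    crC[OF e_3_0 e_7_5 d_2_3]
    crC[OF e_3_0 e_7_5 d_3_0]
    crC[OF e_3_0 e_7_5 d_3_1]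
    crC[OF e_3_0 e_7_5 d_3_2]
    crC[OF e_3_0 e_7_6 d_0_1]
    crC[OF e_3_0 e_7_6 d_0_2]
    crC[OF e_3_0 e_7_6 d_0_3]
    crC[OF e_3_0 e_7_6 d_1_0]
    crC[OF e_3_0 e_7_6 d_1_2]
    crC[OF e_3_0 e_7_6 d_1_3]
    crC[OF e_3_0 e_7_6 d_2_0]
    crC[OF e_3_0 e_7_6 d_2_1]
    crC[OF e_3_0 e_7_6 d_2_3]
    crC[OF e_3_0 e_7_6 d_3_0]
    crC[OF e_3_0 e_7_6 d_3_1]
    crC[OF e_3_0 e_7_6 d_3_2]
    crC[OF e_3_0 e_8_7 d_0_1]
    crC[OF e_3_0 e_8_7 d_0_2]
    crC[OF e_3_0 e_8_7 d_0_3]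
    crC[OF e_3_0 e_8_7 d_1_0]
    crC[OF e_3_0 e_8_7 d_1_2]
    crC[OF e_3_0 e_8_7 d_1_3]
    crC[OF e_3_0 e_8_7 d_2_0]
    crC[OF e_3_0 e_8_7 d_2_1]
    crC[OF e_3_0 e_8_7 d_2_3]
    crC[OF e_3_0 e_8_7 d_3_0]
    crC[OF e_3_0 e_8_7 d_3_1]
    crC[OF e_3_0 e_8_7 d_3_2]
    crC[OF e_3_0 e_11_9 d_0_1]
    crC[OF e_3_0 e_11_9 d_0_2]
    crC[OF e_3_0 e_11_9 d_0_3]
    crC[OF e_3_0 e_11_9 d_1_0]
    crC[OF e_3_0 e_11_9 d_1_2]
    crC[OF e_3_0 e_11_9 d_1_3]
    crC[OF e_3_0 e_11_9 d_2_0]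
    crC[OF e_3_0 e_11_9 d_2_1]
    crC[OF e_3_0 e_11_9 d_2_3]
    crC[OF e_3_0 e_11_9 d_3_0]
    crC[OF e_3_0 e_11_9 d_3_1]
    crC[OF e_3_0 e_11_9 d_3_2]
    crC[OF e_4_0 e_1_2 d_0_1]
    crC[OF e_4_0 e_1_2 d_0_2]
    crC[OF e_4_0 e_1_2 d_0_3]
    crC[OF e_4_0 e_1_2 d_1_0]
    crC[OF e_4_0 e_1_2 d_1_2]
    crC[OF e_4_0 e_1_2 d_1_3]
    crC[OF e_4_0 e_1_2 d_2_0]
    crC[OF e_4_0 e_1_2 d_2_1]
    crC[OF e_4_0 e_1_2 d_2_3]
    crC[OF e_4_0 e_1_2 d_3_0]
    crC[OF e_4_0 e_1_2 d_3_1]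
    crC[OF e_4_0 e_1_2 d_3_2]
    crC[OF e_4_0 e_10_9 d_0_1]
    crC[OF e_4_0 e_10_9 d_0_2]
    crC[OF e_4_0 e_10_9 d_0_3]
    crC[OF e_4_0 e_10_9 d_1_0]
    crC[OF e_4_0 e_10_9 d_1_2]
    crC[OF e_4_0 e_10_9 d_1_3]
    crC[OF e_4_0 e_10_9 d_2_0]
    crC[OF e_4_0 e_10_9 d_2_1]
    crC[OF e_4_0 e_10_9 d_2_3]
    crC[OF e_4_0 e_10_9 d_3_0]
    crC[OF e_4_0 e_10_9 d_3_1]
    crC[OF e_4_0 e_10_9 d_3_2]
    crC[OF e_4_0 e_11_9 d_0_1]
    crC[OF e_4_0 e_11_9 d_0_2]
    crC[OF e_4_0 e_11_9 d_0_3]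
    crC[OF e_4_0 e_11_9 d_1_0]
    crC[OF e_4_0 e_11_9 d_1_2]
    crC[OF e_4_0 e_11_9 d_1_3]
    crC[OF e_4_0 e_11_9 d_2_0]
    crC[OF e_4_0 e_11_9 d_2_1]
    crC[OF e_4_0 e_11_9 d_2_3]
    crC[OF e_4_0 e_11_9 d_3_0]
    crC[OF e_4_0 e_11_9 d_3_1]
    crC[OF e_4_0 e_11_9 d_3_2]
    crC[OF e_8_0 e_5_6 d_0_1]
    crC[OF e_8_0 e_5_6 d_0_2]
    crC[OF e_8_0 e_5_6 d_0_3]
    crC[OF e_8_0 e_5_6 d_1_0]
    crC[OF e_8_0 e_5_6 d_1_2]
    crC[OF e_8_0 e_5_6 d_1_3]
    crC[OF e_8_0 e_5_6 d_2_0]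
    crC[OF e_8_0 e_5_6 d_2_1]
    crC[OF e_8_0 e_5_6 d_2_3]
    crC[OF e_8_0 e_5_6 d_3_0]
    crC[OF e_8_0 e_5_6 d_3_1]
    crC[OF e_8_0 e_5_6 d_3_2]
    crC[OF e_8_0 e_10_9 d_0_1]
    crC[OF e_8_0 e_10_9 d_0_2]
    crC[OF e_8_0 e_10_9 d_0_3]
    crC[OF e_8_0 e_10_9 d_1_0]
    crC[OF e_8_0 e_10_9 d_1_2]
    crC[OF e_8_0 e_10_9 d_1_3]
    crC[OF e_8_0 e_10_9 d_2_0]
    crC[OF e_8_0 e_10_9 d_2_1]
    crC[OF e_8_0 e_10_9 d_2_3]
    crC[OF e_8_0 e_10_9 d_3_0]
    crC[OF e_8_0 e_10_9 d_3_1]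
    crC[OF e_8_0 e_10_9 d_3_2]
    crC[OF e_11_0 e_3_2 d_0_1]
    crC[OF e_11_0 e_3_2 d_0_2]
    crC[OF e_11_0 e_3_2 d_0_3]
    crC[OF e_11_0 e_3_2 d_1_0]
    crC[OF e_11_0 e_3_2 d_1_2]
    crC[OF e_11_0 e_3_2 d_1_3]
    crC[OF e_11_0 e_3_2 d_2_0]
    crC[OF e_11_0 e_3_2 d_2_1]
    crC[OF e_11_0 e_3_2 d_2_3]
    crC[OF e_11_0 e_3_2 d_3_0]
    crC[OF e_11_0 e_3_2 d_3_1]
    crC[OF e_11_0 e_3_2 d_3_2]
    crC[OF e_11_0 e_7_5 d_0_1]
    crC[OF e_11_0 e_7_5 d_0_2]
    crC[OF e_11_0 e_7_5 d_0_3]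
    crC[OF e_11_0 e_7_5 d_1_0]
    crC[OF e_11_0 e_7_5 d_1_2]
    crC[OF e_11_0 e_7_5 d_1_3]
    crC[OF e_11_0 e_7_5 d_2_0]
    crC[OF e_11_0 e_7_5 d_2_1]
    crC[OF e_11_0 e_7_5 d_2_3]
    crC[OF e_11_0 e_7_5 d_3_0]
    crC[OF e_11_0 e_7_5 d_3_1]
    crC[OF e_11_0 e_7_5 d_3_2]
    crC[OF e_2_1 e_0_11 d_0_1]
    crC[OF e_2_1 e_0_11 d_0_2]
    crC[OF e_2_1 e_0_11 d_0_3]
    crC[OF e_2_1 e_0_11 d_1_0]
    crC[OF e_2_1 e_0_11 d_1_2]
    crC[OF e_2_1 e_0_11 d_1_3]
    crC[OF e_2_1 e_0_11 d_2_0]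
    crC[OF e_2_1 e_0_11 d_2_1]
    crC[OF e_2_1 e_0_11 d_2_3]
    crC[OF e_2_1 e_0_11 d_3_0]
    crC[OF e_2_1 e_0_11 d_3_1]
    crC[OF e_2_1 e_0_11 d_3_2]
    crC[OF e_2_1 e_8_11 d_0_1]
    crC[OF e_2_1 e_8_11 d_0_2]
    crC[OF e_2_1 e_8_11 d_0_3]
    crC[OF e_2_1 e_8_11 d_1_0]
    crC[OF e_2_1 e_8_11 d_1_2]
    crC[OF e_2_1 e_8_11 d_1_3]
    crC[OF e_2_1 e_8_11 d_2_0]
    crC[OF e_2_1 e_8_11 d_2_1]
    crC[OF e_2_1 e_8_11 d_2_3]
    crC[OF e_2_1 e_8_11 d_3_0]
    crC[OF e_2_1 e_8_11 d_3_1]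
    crC[OF e_2_1 e_8_11 d_3_2]
    crC[OF e_2_1 e_8_4 d_0_1]
    crC[OF e_2_1 e_8_4 d_0_2]
    crC[OF e_2_1 e_8_4 d_0_3]
    crC[OF e_2_1 e_8_4 d_1_0]
    crC[OF e_2_1 e_8_4 d_1_2]
    crC[OF e_2_1 e_8_4 d_1_3]
    crC[OF e_2_1 e_8_4 d_2_0]
    crC[OF e_2_1 e_8_4 d_2_1]
    crC[OF e_2_1 e_8_4 d_2_3]
    crC[OF e_2_1 e_8_4 d_3_0]
    crC[OF e_2_1 e_8_4 d_3_1]
    crC[OF e_2_1 e_8_4 d_3_2]
    crC[OF e_3_1 e_5_7 d_0_1]
    crC[OF e_3_1 e_5_7 d_0_2]
    crC[OF e_3_1 e_5_7 d_0_3]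
    crC[OF e_3_1 e_5_7 d_1_0]
    crC[OF e_3_1 e_5_7 d_1_2]
    crC[OF e_3_1 e_5_7 d_1_3]
    crC[OF e_3_1 e_5_7 d_2_0]
    crC[OF e_3_1 e_5_7 d_2_1]
    crC[OF e_3_1 e_5_7 d_2_3]
    crC[OF e_3_1 e_5_7 d_3_0]
    crC[OF e_3_1 e_5_7 d_3_1]
    crC[OF e_3_1 e_5_7 d_3_2]
    crC[OF e_3_1 e_7_8 d_0_1]
    crC[OF e_3_1 e_7_8 d_0_2]
    crC[OF e_3_1 e_7_8 d_0_3]
    crC[OF e_3_1 e_7_8 d_1_0]
    crC[OF e_3_1 e_7_8 d_1_2]
    crC[OF e_3_1 e_7_8 d_1_3]
    crC[OF e_3_1 e_7_8 d_2_0]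
    crC[OF e_3_1 e_7_8 d_2_1]
    crC[OF e_3_1 e_7_8 d_2_3]
    crC[OF e_3_1 e_7_8 d_3_0]
    crC[OF e_3_1 e_7_8 d_3_1]
    crC[OF e_3_1 e_7_8 d_3_2]
    crC[OF e_3_1 e_9_11 d_0_1]
    crC[OF e_3_1 e_9_11 d_0_2]
    crC[OF e_3_1 e_9_11 d_0_3]
    crC[OF e_3_1 e_9_11 d_1_0]
    crC[OF e_3_1 e_9_11 d_1_2]
    crC[OF e_3_1 e_9_11 d_1_3]
    crC[OF e_3_1 e_9_11 d_2_0]
    crC[OF e_3_1 e_9_11 d_2_1]
    crC[OF e_3_1 e_9_11 d_2_3]
    crC[OF e_3_1 e_9_11 d_3_0]
    crC[OF e_3_1 e_9_11 d_3_1]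
    crC[OF e_3_1 e_9_11 d_3_2]
    crC[OF e_3_1 e_5_4 d_0_1]
    crC[OF e_3_1 e_5_4 d_0_2]
    crC[OF e_3_1 e_5_4 d_0_3]
    crC[OF e_3_1 e_5_4 d_1_0]
    crC[OF e_3_1 e_5_4 d_1_2]
    crC[OF e_3_1 e_5_4 d_1_3]
    crC[OF e_3_1 e_5_4 d_2_0]
    crC[OF e_3_1 e_5_4 d_2_1]
    crC[OF e_3_1 e_5_4 d_2_3]
    crC[OF e_3_1 e_5_4 d_3_0]
    crC[OF e_3_1 e_5_4 d_3_1]
    crC[OF e_3_1 e_5_4 d_3_2]
    crC[OF e_3_1 e_7_4 d_0_1]
    crC[OF e_3_1 e_7_4 d_0_2]
    crC[OF e_3_1 e_7_4 d_0_3]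
    crC[OF e_3_1 e_7_4 d_1_0]
    crC[OF e_3_1 e_7_4 d_1_2]
    crC[OF e_3_1 e_7_4 d_1_3]
    crC[OF e_3_1 e_7_4 d_2_0]
    crC[OF e_3_1 e_7_4 d_2_1]
    crC[OF e_3_1 e_7_4 d_2_3]
    crC[OF e_3_1 e_7_4 d_3_0]
    crC[OF e_3_1 e_7_4 d_3_1]
    crC[OF e_3_1 e_7_4 d_3_2]
    crC[OF e_3_1 e_8_4 d_0_1]
    crC[OF e_3_1 e_8_4 d_0_2]
    crC[OF e_3_1 e_8_4 d_0_3]
    crC[OF e_3_1 e_8_4 d_1_0]
    crC[OF e_3_1 e_8_4 d_1_2]
    crC[OF e_3_1 e_8_4 d_1_3]
    crC[OF e_3_1 e_8_4 d_2_0]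
    crC[OF e_3_1 e_8_4 d_2_1]
    crC[OF e_3_1 e_8_4 d_2_3]
    crC[OF e_3_1 e_8_4 d_3_0]
    crC[OF e_3_1 e_8_4 d_3_1]
    crC[OF e_3_1 e_8_4 d_3_2]
    crC[OF e_3_1 e_8_7 d_0_1]
    crC[OF e_3_1 e_8_7 d_0_2]
    crC[OF e_3_1 e_8_7 d_0_3]
    crC[OF e_3_1 e_8_7 d_1_0]
    crC[OF e_3_1 e_8_7 d_1_2]
    crC[OF e_3_1 e_8_7 d_1_3]
    crC[OF e_3_1 e_8_7 d_2_0]
    crC[OF e_3_1 e_8_7 d_2_1]
    crC[OF e_3_1 e_8_7 d_2_3]
    crC[OF e_3_1 e_8_7 d_3_0]
    crC[OF e_3_1 e_8_7 d_3_1]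
    crC[OF e_3_1 e_8_7 d_3_2]
    crC[OF e_3_1 e_9_8 d_0_1]
    crC[OF e_3_1 e_9_8 d_0_2]
    crC[OF e_3_1 e_9_8 d_0_3]
    crC[OF e_3_1 e_9_8 d_1_0]
    crC[OF e_3_1 e_9_8 d_1_2]
    crC[OF e_3_1 e_9_8 d_1_3]
    crC[OF e_3_1 e_9_8 d_2_0]
    crC[OF e_3_1 e_9_8 d_2_1]
    crC[OF e_3_1 e_9_8 d_2_3]
    crC[OF e_3_1 e_9_8 d_3_0]
    crC[OF e_3_1 e_9_8 d_3_1]
    crC[OF e_3_1 e_9_8 d_3_2]
    crC[OF e_3_1 e_11_8 d_0_1]
    crC[OF e_3_1 e_11_8 d_0_2]
    crC[OF e_3_1 e_11_8 d_0_3]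
    crC[OF e_3_1 e_11_8 d_1_0]
    crC[OF e_3_1 e_11_8 d_1_2]
    crC[OF e_3_1 e_11_8 d_1_3]
    crC[OF e_3_1 e_11_8 d_2_0]
    crC[OF e_3_1 e_11_8 d_2_1]
    crC[OF e_3_1 e_11_8 d_2_3]
    crC[OF e_3_1 e_11_8 d_3_0]
    crC[OF e_3_1 e_11_8 d_3_1]
    crC[OF e_3_1 e_11_8 d_3_2]
    crC[OF e_3_2 e_11_0 d_0_1]
    crC[OF e_3_2 e_11_0 d_0_2]
    crC[OF e_3_2 e_11_0 d_0_3]
    crC[OF e_3_2 e_11_0 d_1_0]
    crC[OF e_3_2 e_11_0 d_1_2]
    crC[OF e_3_2 e_11_0 d_1_3]
    crC[OF e_3_2 e_11_0 d_2_0]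
    crC[OF e_3_2 e_11_0 d_2_1]
    crC[OF e_3_2 e_11_0 d_2_3]
    crC[OF e_3_2 e_11_0 d_3_0]
    crC[OF e_3_2 e_11_0 d_3_1]
    crC[OF e_3_2 e_11_0 d_3_2]
    crC[OF e_3_2 e_11_8 d_0_1]
    crC[OF e_3_2 e_11_8 d_0_2]
    crC[OF e_3_2 e_11_8 d_0_3]
    crC[OF e_3_2 e_11_8 d_1_0]
    crC[OF e_3_2 e_11_8 d_1_2]
    crC[OF e_3_2 e_11_8 d_1_3]
    crC[OF e_3_2 e_11_8 d_2_0]
    crC[OF e_3_2 e_11_8 d_2_1]
    crC[OF e_3_2 e_11_8 d_2_3]
    crC[OF e_3_2 e_11_8 d_3_0]
    crC[OF e_3_2 e_11_8 d_3_1]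
    crC[OF e_3_2 e_11_8 d_3_2]
    crC[OF e_4_3 e_6_7 d_0_1]
    crC[OF e_4_3 e_6_7 d_0_2]
    crC[OF e_4_3 e_6_7 d_0_3]
    crC[OF e_4_3 e_6_7 d_1_0]
    crC[OF e_4_3 e_6_7 d_1_2]
    crC[OF e_4_3 e_6_7 d_1_3]
    crC[OF e_4_3 e_6_7 d_2_0]
    crC[OF e_4_3 e_6_7 d_2_1]
    crC[OF e_4_3 e_6_7 d_2_3]
    crC[OF e_4_3 e_6_7 d_3_0]
    crC[OF e_4_3 e_6_7 d_3_1]
    crC[OF e_4_3 e_6_7 d_3_2]
    crC[OF e_4_3 e_9_11 d_0_1]
    crC[OF e_4_3 e_9_11 d_0_2]
    crC[OF e_4_3 e_9_11 d_0_3]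
    crC[OF e_4_3 e_9_11 d_1_0]
    crC[OF e_4_3 e_9_11 d_1_2]
    crC[OF e_4_3 e_9_11 d_1_3]
    crC[OF e_4_3 e_9_11 d_2_0]
    crC[OF e_4_3 e_9_11 d_2_1]
    crC[OF e_4_3 e_9_11 d_2_3]
    crC[OF e_4_3 e_9_11 d_3_0]
    crC[OF e_4_3 e_9_11 d_3_1]
    crC[OF e_4_3 e_9_11 d_3_2]
    crC[OF e_4_3 e_6_5 d_0_1]
    crC[OF e_4_3 e_6_5 d_0_2]
    crC[OF e_4_3 e_6_5 d_0_3]
    crC[OF e_4_3 e_6_5 d_1_0]
    crC[OF e_4_3 e_6_5 d_1_2]
    crC[OF e_4_3 e_6_5 d_1_3]
    crC[OF e_4_3 e_6_5 d_2_0]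
    crC[OF e_4_3 e_6_5 d_2_1]
    crC[OF e_4_3 e_6_5 d_2_3]
    crC[OF e_4_3 e_6_5 d_3_0]
    crC[OF e_4_3 e_6_5 d_3_1]
    crC[OF e_4_3 e_6_5 d_3_2]
    crC[OF e_4_3 e_9_8 d_0_1]
    crC[OF e_4_3 e_9_8 d_0_2]
    crC[OF e_4_3 e_9_8 d_0_3]
    crC[OF e_4_3 e_9_8 d_1_0]
    crC[OF e_4_3 e_9_8 d_1_2]
    crC[OF e_4_3 e_9_8 d_1_3]
    crC[OF e_4_3 e_9_8 d_2_0]
    crC[OF e_4_3 e_9_8 d_2_1]
    crC[OF e_4_3 e_9_8 d_2_3]
    crC[OF e_4_3 e_9_8 d_3_0]
    crC[OF e_4_3 e_9_8 d_3_1]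
    crC[OF e_4_3 e_9_8 d_3_2]
    crC[OF e_4_3 e_11_8 d_0_1]
    crC[OF e_4_3 e_11_8 d_0_2]
    crC[OF e_4_3 e_11_8 d_0_3]
    crC[OF e_4_3 e_11_8 d_1_0]
    crC[OF e_4_3 e_11_8 d_1_2]
    crC[OF e_4_3 e_11_8 d_1_3]
    crC[OF e_4_3 e_11_8 d_2_0]
    crC[OF e_4_3 e_11_8 d_2_1]
    crC[OF e_4_3 e_11_8 d_2_3]
    crC[OF e_4_3 e_11_8 d_3_0]
    crC[OF e_4_3 e_11_8 d_3_1]
    crC[OF e_4_3 e_11_8 d_3_2]
    crC[OF e_4_3 e_11_9 d_0_1]
    crC[OF e_4_3 e_11_9 d_0_2]
    crC[OF e_4_3 e_11_9 d_0_3]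
    crC[OF e_4_3 e_11_9 d_1_0]
    crC[OF e_4_3 e_11_9 d_1_2]
    crC[OF e_4_3 e_11_9 d_1_3]
    crC[OF e_4_3 e_11_9 d_2_0]
    crC[OF e_4_3 e_11_9 d_2_1]
    crC[OF e_4_3 e_11_9 d_2_3]
    crC[OF e_4_3 e_11_9 d_3_0]
    crC[OF e_4_3 e_11_9 d_3_1]
    crC[OF e_4_3 e_11_9 d_3_2]
    crC[OF e_5_4 e_0_11 d_0_1]
    crC[OF e_5_4 e_0_11 d_0_2]
    crC[OF e_5_4 e_0_11 d_0_3]
    crC[OF e_5_4 e_0_11 d_1_0]
    crC[OF e_5_4 e_0_11 d_1_2]
    crC[OF e_5_4 e_0_11 d_1_3]
    crC[OF e_5_4 e_0_11 d_2_0]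
    crC[OF e_5_4 e_0_11 d_2_1]
    crC[OF e_5_4 e_0_11 d_2_3]
    crC[OF e_5_4 e_0_11 d_3_0]
    crC[OF e_5_4 e_0_11 d_3_1]
    crC[OF e_5_4 e_0_11 d_3_2]
    crC[OF e_5_4 e_8_9 d_0_1]
    crC[OF e_5_4 e_8_9 d_0_2]
    crC[OF e_5_4 e_8_9 d_0_3]
    crC[OF e_5_4 e_8_9 d_1_0]
    crC[OF e_5_4 e_8_9 d_1_2]
    crC[OF e_5_4 e_8_9 d_1_3]
    crC[OF e_5_4 e_8_9 d_2_0]
    crC[OF e_5_4 e_8_9 d_2_1]
    crC[OF e_5_4 e_8_9 d_2_3]
    crC[OF e_5_4 e_8_9 d_3_0]
    crC[OF e_5_4 e_8_9 d_3_1]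
    crC[OF e_5_4 e_8_9 d_3_2]
    crC[OF e_5_4 e_8_11 d_0_1]
    crC[OF e_5_4 e_8_11 d_0_2]
    crC[OF e_5_4 e_8_11 d_0_3]
    crC[OF e_5_4 e_8_11 d_1_0]
    crC[OF e_5_4 e_8_11 d_1_2]
    crC[OF e_5_4 e_8_11 d_1_3]
    crC[OF e_5_4 e_8_11 d_2_0]
    crC[OF e_5_4 e_8_11 d_2_1]
    crC[OF e_5_4 e_8_11 d_2_3]
    crC[OF e_5_4 e_8_11 d_3_0]
    crC[OF e_5_4 e_8_11 d_3_1]
    crC[OF e_5_4 e_8_11 d_3_2]
    crC[OF e_5_4 e_11_9 d_0_1]
    crC[OF e_5_4 e_11_9 d_0_2]
    crC[OF e_5_4 e_11_9 d_0_3]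
    crC[OF e_5_4 e_11_9 d_1_0]
    crC[OF e_5_4 e_11_9 d_1_2]
    crC[OF e_5_4 e_11_9 d_1_3]
    crC[OF e_5_4 e_11_9 d_2_0]
    crC[OF e_5_4 e_11_9 d_2_1]
    crC[OF e_5_4 e_11_9 d_2_3]
    crC[OF e_5_4 e_11_9 d_3_0]
    crC[OF e_5_4 e_11_9 d_3_1]
    crC[OF e_5_4 e_11_9 d_3_2]
    crC[OF e_7_4 e_0_11 d_0_1]
    crC[OF e_7_4 e_0_11 d_0_2]
    crC[OF e_7_4 e_0_11 d_0_3]
    crC[OF e_7_4 e_0_11 d_1_0]
    crC[OF e_7_4 e_0_11 d_1_2]
    crC[OF e_7_4 e_0_11 d_1_3]
    crC[OF e_7_4 e_0_11 d_2_0]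
    crC[OF e_7_4 e_0_11 d_2_1]
    crC[OF e_7_4 e_0_11 d_2_3]
    crC[OF e_7_4 e_0_11 d_3_0]
    crC[OF e_7_4 e_0_11 d_3_1]
    crC[OF e_7_4 e_0_11 d_3_2]
    crC[OF e_7_4 e_9_10 d_0_1]
    crC[OF e_7_4 e_9_10 d_0_2]
    crC[OF e_7_4 e_9_10 d_0_3]
    crC[OF e_7_4 e_9_10 d_1_0]
    crC[OF e_7_4 e_9_10 d_1_2]
    crC[OF e_7_4 e_9_10 d_1_3]
    crC[OF e_7_4 e_9_10 d_2_0]
    crC[OF e_7_4 e_9_10 d_2_1]
    crC[OF e_7_4 e_9_10 d_2_3]
    crC[OF e_7_4 e_9_10 d_3_0]
    crC[OF e_7_4 e_9_10 d_3_1]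
    crC[OF e_7_4 e_9_10 d_3_2]
    crC[OF e_7_4 e_3_1 d_0_1]
    crC[OF e_7_4 e_3_1 d_0_2]
    crC[OF e_7_4 e_3_1 d_0_3]
    crC[OF e_7_4 e_3_1 d_1_0]
    crC[OF e_7_4 e_3_1 d_1_2]
    crC[OF e_7_4 e_3_1 d_1_3]
    crC[OF e_7_4 e_3_1 d_2_0]
    crC[OF e_7_4 e_3_1 d_2_1]
    crC[OF e_7_4 e_3_1 d_2_3]
    crC[OF e_7_4 e_3_1 d_3_0]
    crC[OF e_7_4 e_3_1 d_3_1]
    crC[OF e_7_4 e_3_1 d_3_2]
    crC[OF e_7_4 e_11_9 d_0_1]
    crC[OF e_7_4 e_11_9 d_0_2]
    crC[OF e_7_4 e_11_9 d_0_3]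
    crC[OF e_7_4 e_11_9 d_1_0]
    crC[OF e_7_4 e_11_9 d_1_2]
    crC[OF e_7_4 e_11_9 d_1_3]
    crC[OF e_7_4 e_11_9 d_2_0]
    crC[OF e_7_4 e_11_9 d_2_1]
    crC[OF e_7_4 e_11_9 d_2_3]
    crC[OF e_7_4 e_11_9 d_3_0]
    crC[OF e_7_4 e_11_9 d_3_1]
    crC[OF e_7_4 e_11_9 d_3_2]
    crC[OF e_7_4 e_11_10 d_0_1]
    crC[OF e_7_4 e_11_10 d_0_2]
    crC[OF e_7_4 e_11_10 d_0_3]
    crC[OF e_7_4 e_11_10 d_1_0]
    crC[OF e_7_4 e_11_10 d_1_2]
    crC[OF e_7_4 e_11_10 d_1_3]
    crC[OF e_7_4 e_11_10 d_2_0]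
    crC[OF e_7_4 e_11_10 d_2_1]
    crC[OF e_7_4 e_11_10 d_2_3]
    crC[OF e_7_4 e_11_10 d_3_0]
    crC[OF e_7_4 e_11_10 d_3_1]
    crC[OF e_7_4 e_11_10 d_3_2]
    crC[OF e_8_4 e_5_6 d_0_1]
    crC[OF e_8_4 e_5_6 d_0_2]
    crC[OF e_8_4 e_5_6 d_0_3]
    crC[OF e_8_4 e_5_6 d_1_0]
    crC[OF e_8_4 e_5_6 d_1_2]
    crC[OF e_8_4 e_5_6 d_1_3]
    crC[OF e_8_4 e_5_6 d_2_0]
    crC[OF e_8_4 e_5_6 d_2_1]
    crC[OF e_8_4 e_5_6 d_2_3]
    crC[OF e_8_4 e_5_6 d_3_0]
    crC[OF e_8_4 e_5_6 d_3_1]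
    crC[OF e_8_4 e_5_6 d_3_2]
    crC[OF e_7_5 e_0_8 d_0_1]
    crC[OF e_7_5 e_0_8 d_0_2]
    crC[OF e_7_5 e_0_8 d_0_3]
    crC[OF e_7_5 e_0_8 d_1_0]
    crC[OF e_7_5 e_0_8 d_1_2]
    crC[OF e_7_5 e_0_8 d_1_3]
    crC[OF e_7_5 e_0_8 d_2_0]
    crC[OF e_7_5 e_0_8 d_2_1]
    crC[OF e_7_5 e_0_8 d_2_3]
    crC[OF e_7_5 e_0_8 d_3_0]
    crC[OF e_7_5 e_0_8 d_3_1]
    crC[OF e_7_5 e_0_8 d_3_2]
    crC[OF e_7_5 e_0_11 d_0_1]
    crC[OF e_7_5 e_0_11 d_0_2]
    crC[OF e_7_5 e_0_11 d_0_3]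
    crC[OF e_7_5 e_0_11 d_1_0]
    crC[OF e_7_5 e_0_11 d_1_2]
    crC[OF e_7_5 e_0_11 d_1_3]
    crC[OF e_7_5 e_0_11 d_2_0]
    crC[OF e_7_5 e_0_11 d_2_1]
    crC[OF e_7_5 e_0_11 d_2_3]
    crC[OF e_7_5 e_0_11 d_3_0]
    crC[OF e_7_5 e_0_11 d_3_1]
    crC[OF e_7_5 e_0_11 d_3_2]
    crC[OF e_7_5 e_9_11 d_0_1]
    crC[OF e_7_5 e_9_11 d_0_2]
    crC[OF e_7_5 e_9_11 d_0_3]
    crC[OF e_7_5 e_9_11 d_1_0]
    crC[OF e_7_5 e_9_11 d_1_2]
    crC[OF e_7_5 e_9_11 d_1_3]
    crC[OF e_7_5 e_9_11 d_2_0]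
    crC[OF e_7_5 e_9_11 d_2_1]
    crC[OF e_7_5 e_9_11 d_2_3]
    crC[OF e_7_5 e_9_11 d_3_0]
    crC[OF e_7_5 e_9_11 d_3_1]
    crC[OF e_7_5 e_9_11 d_3_2]
    crC[OF e_7_5 e_11_0 d_0_1]
    crC[OF e_7_5 e_11_0 d_0_2]
    crC[OF e_7_5 e_11_0 d_0_3]
    crC[OF e_7_5 e_11_0 d_1_0]
    crC[OF e_7_5 e_11_0 d_1_2]
    crC[OF e_7_5 e_11_0 d_1_3]
    crC[OF e_7_5 e_11_0 d_2_0]
    crC[OF e_7_5 e_11_0 d_2_1]
    crC[OF e_7_5 e_11_0 d_2_3]
    crC[OF e_7_5 e_11_0 d_3_0]
    crC[OF e_7_5 e_11_0 d_3_1]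
    crC[OF e_7_5 e_11_0 d_3_2]
    crC[OF e_7_5 e_9_8 d_0_1]
    crC[OF e_7_5 e_9_8 d_0_2]
    crC[OF e_7_5 e_9_8 d_0_3]
    crC[OF e_7_5 e_9_8 d_1_0]
    crC[OF e_7_5 e_9_8 d_1_2]
    crC[OF e_7_5 e_9_8 d_1_3]
    crC[OF e_7_5 e_9_8 d_2_0]
    crC[OF e_7_5 e_9_8 d_2_1]
    crC[OF e_7_5 e_9_8 d_2_3]
    crC[OF e_7_5 e_9_8 d_3_0]
    crC[OF e_7_5 e_9_8 d_3_1]
    crC[OF e_7_5 e_9_8 d_3_2]
    crC[OF e_7_5 e_11_8 d_0_1]
    crC[OF e_7_5 e_11_8 d_0_2]
    crC[OF e_7_5 e_11_8 d_0_3]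
    crC[OF e_7_5 e_11_8 d_1_0]
    crC[OF e_7_5 e_11_8 d_1_2]
    crC[OF e_7_5 e_11_8 d_1_3]
    crC[OF e_7_5 e_11_8 d_2_0]
    crC[OF e_7_5 e_11_8 d_2_1]
    crC[OF e_7_5 e_11_8 d_2_3]
    crC[OF e_7_5 e_11_8 d_3_0]
    crC[OF e_7_5 e_11_8 d_3_1]
    crC[OF e_7_5 e_11_8 d_3_2]
    crC[OF e_8_7 e_10_11 d_0_1]
    crC[OF e_8_7 e_10_11 d_0_2]
    crC[OF e_8_7 e_10_11 d_0_3]
    crC[OF e_8_7 e_10_11 d_1_0]
    crC[OF e_8_7 e_10_11 d_1_2]
    crC[OF e_8_7 e_10_11 d_1_3]
    crC[OF e_8_7 e_10_11 d_2_0]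
    crC[OF e_8_7 e_10_11 d_2_1]
    crC[OF e_8_7 e_10_11 d_2_3]
    crC[OF e_8_7 e_10_11 d_3_0]
    crC[OF e_8_7 e_10_11 d_3_1]
    crC[OF e_8_7 e_10_11 d_3_2]
    crC[OF e_8_7 e_10_9 d_0_1]
    crC[OF e_8_7 e_10_9 d_0_2]
    crC[OF e_8_7 e_10_9 d_0_3]
    crC[OF e_8_7 e_10_9 d_1_0]
    crC[OF e_8_7 e_10_9 d_1_2]
    crC[OF e_8_7 e_10_9 d_1_3]
    crC[OF e_8_7 e_10_9 d_2_0]
    crC[OF e_8_7 e_10_9 d_2_1]
    crC[OF e_8_7 e_10_9 d_2_3]
    crC[OF e_8_7 e_10_9 d_3_0]
    crC[OF e_8_7 e_10_9 d_3_1]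
    crC[OF e_8_7 e_10_9 d_3_2]
    crC[OF e_9_8 e_7_5 d_0_1]
    crC[OF e_9_8 e_7_5 d_0_2]
    crC[OF e_9_8 e_7_5 d_0_3]
    crC[OF e_9_8 e_7_5 d_1_0]
    crC[OF e_9_8 e_7_5 d_1_2]
    crC[OF e_9_8 e_7_5 d_1_3]
    crC[OF e_9_8 e_7_5 d_2_0]
    crC[OF e_9_8 e_7_5 d_2_1]
    crC[OF e_9_8 e_7_5 d_2_3]
    crC[OF e_9_8 e_7_5 d_3_0]
    crC[OF e_9_8 e_7_5 d_3_1]
    crC[OF e_9_8 e_7_5 d_3_2]
    crC[OF e_11_8 e_3_1 d_0_1]
    crC[OF e_11_8 e_3_1 d_0_2]
    crC[OF e_11_8 e_3_1 d_0_3]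
    crC[OF e_11_8 e_3_1 d_1_0]
    crC[OF e_11_8 e_3_1 d_1_2]
    crC[OF e_11_8 e_3_1 d_1_3]
    crC[OF e_11_8 e_3_1 d_2_0]
    crC[OF e_11_8 e_3_1 d_2_1]
    crC[OF e_11_8 e_3_1 d_2_3]
    crC[OF e_11_8 e_3_1 d_3_0]
    crC[OF e_11_8 e_3_1 d_3_1]
    crC[OF e_11_8 e_3_1 d_3_2]
    by sat
qed

definition pv :: "nat \<Rightarrow> real^2" where "pv v = P (real v) 0"
definition gam :: "nat \<Rightarrow> nat \<Rightarrow> real \<Rightarrow> real^2" where
  "gam u v = (if u < v then gp (real u) (real v) else reversepath (gp (real v) (real u)))"

lemma gam_props:
  assumes "u \<noteq> v"
  shows "arc (gam u v) \<and> pathstart (gam u v) = pv u \<and> pathfinish (gam u v) = pv v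
    \<and> path_image (gam u v) = Img (real (min u v)) (real (max u v))"
proof (cases "u < v")
  case True
  then show ?thesis by (simp add: gam_def pv_def gp_arc gp_image min_def max_def)
next
  case False
  then have "v < u" using assms by simp
  then show ?thesis using False
    by (simp add: gam_def pv_def gp_arc gp_image min_def max_def arc_reversepath path_image_reversepath)
qed

lemma E0_irrefl: "(u, v) \<in> E0 \<Longrightarrow> u \<noteq> v"
  by (auto simp: E0_def)

lemma E0_V0: "(u, v) \<in> E0 \<Longrightarrow> u \<in> V0 \<and> v \<in> V0"
  by (auto simp: E0_def V0_def)

lemma E0_nc: "\<forall>(u,v)\<in>E0. \<forall>(x,y)\<in>E0. (min u v, max u v) \<noteq> (min x y, max x y) \<longrightarrow>
   \<not> (min u v < min x y \<and> min x y < max u v \<and> max u v < max x y) \<and>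
   \<not> (min x y < min u v \<and> min u v < max x y \<and> max x y < max u v)"
  by (simp add: E0_def)

lemma minmax_ne: "{u, v} \<noteq> {x, y} \<Longrightarrow> (min u v, max u v) \<noteq> (min x y, max (x::nat) y)"
  by (auto simp: min_def max_def split: if_splits)

lemma plane: "plane_embedding V0 E0 pv gam"
  unfolding plane_embedding_def
proof (intro conjI)
  show "inj_on pv V0" by (auto simp: inj_on_def pv_def)
  show "\<forall>(u, v)\<in>E0. arc (gam u v) \<and> pathstart (gam u v) = pv u \<and> pathfinish (gam u v) = pv v
                 \<and> path_image (gam v u) = path_image (gam u v)"
  proof (clarify)
    fix u v assume e: "(u, v) \<in> E0"
    then have "u \<noteq> v" by (rule E0_irrefl)
    then show "arc (gam u v) \<and> pathstart (gam u v) = pv u \<and> pathfinish (gam u v) = pv v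
                 \<and> path_image (gam v u) = path_image (gam u v)"
      using gam_props[of u v] gam_props[of v u] by (simp add: min.commute max.commute)
  qed
  show "\<forall>(u, v)\<in>E0. \<forall>w\<in>V0. w \<noteq> u \<and> w \<noteq> v \<longrightarrow> pv w \<notin> path_image (gam u v)"
  proof (clarify)
    fix u v w assume e: "(u, v) \<in> E0" and w: "w \<noteq> u" "w \<noteq> v" and pw: "pv w \<in> path_image (gam u v)"
    then have "u \<noteq> v" using E0_irrefl by blast
    then have "P (real w) 0 \<in> Img (real (min u v)) (real (max u v))"
      using gam_props[of u v] pw by (simp add: pv_def)
    then have "real w = real (min u v) \<or> real w = real (max u v)" by (rule Img_vertex)
    then show False using w by (auto simp: min_def max_def split: if_splits)
  qed
  show "\<forall>(u, v)\<in>E0. \<forall>(x, y)\<in>E0. {u, v} \<noteq> {x, y} \<longrightarrow>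
        path_image (gam u v) \<inter> path_image (gam x y) \<subseteq> pv ` ({u, v} \<inter> {x, y})"
  proof (clarify)
    fix u v x y z assume e1: "(u, v) \<in> E0" and e2: "(x, y) \<in> E0" and ne: "{u, v} \<noteq> {x, y}"
      and z1: "z \<in> path_image (gam u v)" and z2: "z \<in> path_image (gam x y)"
    have uv: "u \<noteq> v" using e1 E0_irrefl by blast
    have xy: "x \<noteq> y" using e2 E0_irrefl by blast
    have mm: "(min u v, max u v) \<noteq> (min x y, max x y)" using minmax_ne[OF ne] .
    have nc: "\<not> (min u v < min x y \<and> min x y < max u v \<and> max u v < max x y) \<and>
        \<not> (min x y < min u v \<and> min u v < max x y \<and> max x y < max u v)"
      using E0_nc e1 e2 mm by fastforce
    have zi1: "z \<in> Img (real (min u v)) (real (max u v))" using z1 gam_props[OF uv] by simp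
    have zi2: "z \<in> Img (real (min x y)) (real (max x y))" using z2 gam_props[OF xy] by simp
    have lt1: "real (min u v) < real (max u v)" using uv by (simp add: min_def max_def)
    have lt2: "real (min x y) < real (max x y)" using xy by (simp add: min_def max_def)
    obtain w where w: "z = P w 0" "w = real (min u v) \<or> w = real (max u v)"
        "w = real (min x y) \<or> w = real (max x y)"
      using Img_inter[OF lt1 lt2 _ _ _ zi1 zi2] mm nc by auto
    obtain k1 where k1: "k1 \<in> {u, v}" "w = real k1" using w(2) by (auto simp: min_def max_def split: if_splits)
    obtain k2 where k2: "k2 \<in> {x, y}" "w = real k2" using w(3) by (auto simp: min_def max_def split: if_splits)
    have "k1 = k2" using k1 k2 by simp
    then show "z \<in> pv ` ({u, v} \<inter> {x, y})" using k1 k2 w(1) by (auto simp: pv_def)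
  qed
qed

lemma drawing_upper: "drawing V0 E0 pv gam \<subseteq> {z. 0 \<le> z $ 2}"
proof
  fix z assume "z \<in> drawing V0 E0 pv gam"
  then consider "z \<in> pv ` V0" | u v where "(u, v) \<in> E0" "z \<in> path_image (gam u v)"
    by (auto simp: drawing_def)
  then show "z \<in> {z. 0 \<le> z $ 2}"
  proof cases
    case 1 then show ?thesis by (auto simp: pv_def)
  next
    case 2
    then have "u \<noteq> v" using E0_irrefl by blast
    then show ?thesis using 2 gam_props[of u v] Img_nonneg by auto
  qed
qed

lemma outer: "outerplanar V0 E0"
  unfolding outerplanar_def
proof (intro exI conjI)
  define H :: "(real^2) set" where "H = {z. z $ 2 < 0}"
  define S where "S = - drawing V0 E0 pv gam"
  have HS: "H \<subseteq> S" using drawing_upper by (auto simp: H_def S_def)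
  have zH: "P 0 (-1) \<in> H" by (simp add: H_def)
  have Heq: "H = {z. axis 2 1 \<bullet> z < 0}"
    by (simp add: H_def cart_eq_inner_axis inner_commute)
  have "convex H" unfolding Heq by (rule convex_halfspace_lt)
  then have "connected H" by (rule convex_connected)
  then have HC: "H \<subseteq> connected_component_set S (P 0 (-1))"
    using connected_component_maximal[OF zH _ HS] by blast
  show "plane_embedding V0 E0 pv gam" by (rule plane)
  show "P 0 (-1) \<notin> drawing V0 E0 pv gam" using zH HS by (auto simp: S_def)
  show "\<not> bounded (connected_component_set (- drawing V0 E0 pv gam) (P 0 (-1)))"
  proof
    assume "bounded (connected_component_set (- drawing V0 E0 pv gam) (P 0 (-1)))"
    then have "bounded H" using HC bounded_subset unfolding S_def by blast
    then obtain B where B: "\<And>z. z \<in> H \<Longrightarrow> norm z \<le> B" by (auto simp: bounded_iff)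
    have "P (\<bar>B\<bar> + 1) (-1) \<in> H" by (simp add: H_def)
    then have "norm (P (\<bar>B\<bar> + 1) (-1)) \<le> B" by (rule B)
    moreover have "\<bar>P (\<bar>B\<bar> + 1) (-1) $ 1\<bar> \<le> norm (P (\<bar>B\<bar> + 1) (-1))"
      by (rule component_le_norm_cart)
    ultimately show False by simp
  qed
  show "\<forall>v\<in>V0. pv v \<in> closure (connected_component_set (- drawing V0 E0 pv gam) (P 0 (-1)))"
  proof
    fix v assume "v \<in> V0"
    have "pv v \<in> closure H" by (simp add: H_def pv_def)
    then show "pv v \<in> closure (connected_component_set (- drawing V0 E0 pv gam) (P 0 (-1)))"
      using closure_mono[OF HC] unfolding S_def by blast
  qed
qed

lemma sg: "simple_graph V0 E0"
  by (auto simp: simple_graph_def V0_def E0_def sym_def irrefl_def)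

lemma up: "track_layout V0 E0 5"
proof -
  define ord5 where "ord5 i = {(a, b). a \<in> V0 \<and> b \<in> V0 \<and> trk5 a = i \<and> trk5 b = i \<and> a < b}" for i
  have 1: "\<forall>v\<in>V0. trk5 v < 5" by (simp add: V0_def trk5_def)
  have 2: "\<forall>(u, v)\<in>E0. trk5 u \<noteq> trk5 v" by (simp add: E0_def trk5_def)
  have 3: "\<forall>i<5. ord5 i \<subseteq> {v\<in>V0. trk5 v = i} \<times> {v\<in>V0. trk5 v = i}
              \<and> strict_linear_order_on {v\<in>V0. trk5 v = i} (ord5 i)"
    by (auto simp: ord5_def strict_linear_order_on_def trans_def irrefl_def total_on_def)
  have c4x: "\<forall>(u, v)\<in>E0. \<forall>(x, y)\<in>E0. trk5 u = trk5 x \<longrightarrow> trk5 v = trk5 y \<longrightarrow> trk5 u \<noteq> trk5 v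
      \<longrightarrow> \<not> (u < x \<and> y < v)"
    using chk by (simp add: E0_El list_all_iff)
  have 4: "\<forall>u v x y. (u, v) \<in> E0 \<longrightarrow> (x, y) \<in> E0 \<longrightarrow>
            trk5 u = trk5 x \<longrightarrow> trk5 v = trk5 y \<longrightarrow> trk5 u \<noteq> trk5 v \<longrightarrow>
            \<not> ((u, x) \<in> ord5 (trk5 u) \<and> (y, v) \<in> ord5 (trk5 v))"
  proof (intro allI impI)
    fix u v x y assume h: "(u, v) \<in> E0" "(x, y) \<in> E0" "trk5 u = trk5 x" "trk5 v = trk5 y" "trk5 u \<noteq> trk5 v"
    have "\<not> (u < x \<and> y < v)" using c4x h by fastforce
    then show "\<not> ((u, x) \<in> ord5 (trk5 u) \<and> (y, v) \<in> ord5 (trk5 v))" by (auto simp: ord5_def)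
  qed
  show ?thesis unfolding track_layout_def
    by (rule exI[of _ trk5], rule exI[of _ ord5]) (use 1 2 3 4 in blast)
qed

lemma low: assumes t: "t \<le> 4" shows "\<not> track_layout V0 E0 t"
proof
  assume "track_layout V0 E0 t"
  then obtain trk :: "nat \<Rightarrow> nat" and ord :: "nat \<Rightarrow> (nat \<times> nat) set" where
    h1: "\<forall>v\<in>V0. trk v < t" and h2: "\<forall>(u, v)\<in>E0. trk u \<noteq> trk v"
    and h3: "\<forall>i<t. ord i \<subseteq> {v\<in>V0. trk v = i} \<times> {v\<in>V0. trk v = i}
              \<and> strict_linear_order_on {v\<in>V0. trk v = i} (ord i)"
    and h4: "\<forall>u v x y. (u, v) \<in> E0 \<longrightarrow> (x, y) \<in> E0 \<longrightarrow>
            trk u = trk x \<longrightarrow> trk v = trk y \<longrightarrow> trk u \<noteq> trk v \<longrightarrow>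
            \<not> ((u, x) \<in> ord (trk u) \<and> (y, v) \<in> ord (trk v))"
    unfolding track_layout_def by blast
  show False
  proof (rule core[of trk "\<lambda>a b. (a, b) \<in> ord (trk a)"])
    fix v assume "v \<in> V0" then show "trk v < 4" using h1 t by force
  next
    fix u v assume "(u, v) \<in> E0" then show "trk u \<noteq> trk v" using h2 by blast
  next
    fix a b assume ab: "a \<in> V0" "b \<in> V0" "a \<noteq> b" "trk a = trk b"
    have "trk a < t" using h1 ab by blast
    then have "total_on {v\<in>V0. trk v = trk a} (ord (trk a))"
      using h3 by (auto simp: strict_linear_order_on_def)
    then have "(a, b) \<in> ord (trk a) \<or> (b, a) \<in> ord (trk a)"
      using ab by (auto simp: total_on_def)
    then show "(a, b) \<in> ord (trk a) \<or> (b, a) \<in> ord (trk b)" using ab by simp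
  next
    fix u v x y assume "(u, v) \<in> E0" "(x, y) \<in> E0" "trk u = trk x" "trk v = trk y" "trk u \<noteq> trk v"
      "(u, x) \<in> ord (trk u)" "(y, v) \<in> ord (trk y)"
    then show False using h4 by metis
  qed
qed

theorem theorem9:
  shows "\<exists>(V :: nat set) E. simple_graph V E \<and> outerplanar V E \<and> track_number V E = 5"
proof (intro exI conjI)
  show "simple_graph V0 E0" by (rule sg)
  show "outerplanar V0 E0" by (rule outer)
  show "track_number V0 E0 = 5" unfolding track_number_def
  proof (rule Least_equality)
    show "track_layout V0 E0 5" by (rule up)
  next
    fix y assume "track_layout V0 E0 y"
    then show "5 \<le> y" using low[of y] by (cases "y \<le> 4") auto
  qed
qed

end
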